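(* Assume the setting below with $\mathcal{L}\in H^{-2}(\Omega)^k$. Let $\mathcal{D}=(X_{\mathcal{D},0},\Pi_{\mathcal{D}},\nabla_{\mathcal{D}},\mathcal{H}_{\mathcal{D}})$ be a Hessian discretisation and $E_{\mathcal{D}}$ a companion operator for it with $\Gamma(E_{\mathcal{D}})<\infty$. Then there exists at least one solution $\Psi_{\mathcal{D}}\in X_{\mathcal{D},0}^k$ of the Hessian scheme $$\mathcal{A}(\mathcal{H}_{\mathcal{D}}\Psi_{\mathcal{D}},\mathcal{H}_{\mathcal{D}}\Phi_{\mathcal{D}})+\mathcal{B}(\mathcal{H}_{\mathcal{D}}\Psi_{\mathcal{D}},\nabla_{\mathcal{D}}\Psi_{\mathcal{D}},\nabla_{\mathcal{D}}\Phi_{\mathcal{D}})=\mathcal{L}(E_{\mathcal{D}}\Phi_{\mathcal{D}})\quad\text{for all }\Phi_{\mathcal{D}}\in X_{\mathcal{D},0}^k.$$ Furthermore, if $$\|\mathcal{L}\|_{-2}<\frac{\overline{\alpha}^2}{\|\mathcal{B}\|\,C_{\mathcal{D}}^2\,\Gamma(E_{\mathcal{D}})\,C_{2,\rm eq}},$$ then this solution is unique.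
   Context: Let $\Omega\subset\mathbb{R}^d$ ($d\ge1$) be a bounded domain, $k\ge1$ an integer, $X=H^2_0(\Omega)$. For a function space $E$, norms on $E^k$ are written as on $E$; $\|\cdot\|$ is the $L^2$ norm, $\|\cdot\|_{0,4}$ the $L^4$ norm, $\|\cdot\|_m$ and $|\cdot|_m$ the $H^m$ norm and seminorm. $\|\cdot\|_{-2}$ is the dual norm on $H^{-2}(\Omega)^k=(H^2_0(\Omega)^k)'$ with respect to $\|\cdot\|_2$. $\mathcal{H}$ denotes the Hessian; for $\Psi=(\psi_1,\dots,\psi_k)$, $\mathcal{H}\Psi$, $\nabla\Psi$ act componentwise. $C_{2,\rm eq}$ is a constant with $\|\varphi\|_2\le C_{2,\rm eq}|\varphi|_2$ for all $\varphi\in H^2_0(\Omega)$ (here $|\varphi|_2=\|\mathcal{H}\varphi\|$). Standing assumptions: $\mathcal{A}$ is a continuous bilinear form on $L^2(\Omega;\mathbb{R}^{d\times d})^k$, coercive with constant $\overline{\alpha}>0$ ($\mathcal{A}(\Xi,\Xi)\ge\overline{\alpha}\|\Xi\|^2$); $\mathcal{B}$ is a continuous trilinear form on $L^2(\Omega;\mathbb{R}^{d\times d})^k\times L^4(\Omega;\mathbb{R}^d)^k\times L^4(\Omega;\mathbb{R}^d)^k$ with norm $\|\mathcal{B}\|$, and $\mathcal{B}(\Xi,\Theta,\Theta)=0$ for all $\Xi\in L^2(\Omega;\mathbb{R}^{d\times d})^k$, $\Theta\in L^4(\Omega;\mathbb{R}^d)^k$; $\mathcal{L}$ is a continuous linear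 functional on $H^2_0(\Omega)^k$. A Hessian discretisation is a quadruple $\mathcal{D}=(X_{\mathcal{D},0},\Pi_{\mathcal{D}},\nabla_{\mathcal{D}},\mathcal{H}_{\mathcal{D}})$ where $X_{\mathcal{D},0}$ is a finite-dimensional real vector space and $\Pi_{\mathcal{D}}:X_{\mathcal{D},0}\to L^2(\Omega)$, $\nabla_{\mathcal{D}}:X_{\mathcal{D},0}\to L^4(\Omega;\mathbb{R}^d)$, $\mathcal{H}_{\mathcal{D}}:X_{\mathcal{D},0}\to L^2(\Omega;\mathbb{R}^{d\times d})$ are linear maps such that $\|w\|_{\mathcal{D}}:=\|\mathcal{H}_{\mathcal{D}}w\|$ is a norm on $X_{\mathcal{D},0}$. A companion operator is a linear map $E_{\mathcal{D}}:X_{\mathcal{D},0}\to H^2_0(\Omega)$, and $\Gamma(E_{\mathcal{D}}):=\sup_{\psi\in X_{\mathcal{D},0}\setminus\{0\}}\|\mathcal{H}E_{\mathcal{D}}\psi\|/\|\psi\|_{\mathcal{D}}$. All these maps act componentwise on $X_{\mathcal{D},0}^k$ (and $\|\cdot\|_{\mathcal{D}}$ is extended accordingly). Finally $C_{\mathcal{D}}:=\max_{w\in X_{\mathcal{D},0}\setminus\{0\}}\max\{\|\Pi_{\mathcal{D}}w\|/\|w\|_{\mathcal{D}},\ \|\nabla_{\mathcal{D}}w\|_{0,4}/\|w\|_{\mathcal{D}}\}$. *)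

theory Defs
  imports "HOL-Analysis.Analysis"
begin

section \<open>Lebesgue spaces on a domain (functions represented pointwise)\<close>

definition Lp_on :: "real \<Rightarrow> ('a::euclidean_space) set \<Rightarrow> ('a \<Rightarrow> 'b::real_normed_vector) \<Rightarrow> bool" where
  "Lp_on p \<Omega> f \<longleftrightarrow> f \<in> borel_measurable (lebesgue_on \<Omega>) \<and>
     integrable (lebesgue_on \<Omega>) (\<lambda>x. norm (f x) powr p)"

definition Lp_norm :: "real \<Rightarrow> ('a::euclidean_space) set \<Rightarrow> ('a \<Rightarrow> 'b::real_normed_vector) \<Rightarrow> real" where
  "Lp_norm p \<Omega> f = (\<integral>x. norm (f x) powr p \<partial>lebesgue_on \<Omega>) powr (1 / p)"

definition lincomb :: "real \<Rightarrow> ('a \<Rightarrow> 'b::real_vector) \<Rightarrow> real \<Rightarrow> ('a \<Rightarrow> 'b) \<Rightarrow> 'a \<Rightarrow> 'b" where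
  "lincomb a u b v = (\<lambda>x. a *\<^sub>R u x + b *\<^sub>R v x)"

definition pd :: "'n::finite \<Rightarrow> (real^'n \<Rightarrow> real) \<Rightarrow> real^'n \<Rightarrow> real" where
  "pd i f x = frechet_derivative f (at x) (axis i 1)"

definition iter_pd :: "'n::finite list \<Rightarrow> (real^'n \<Rightarrow> real) \<Rightarrow> real^'n \<Rightarrow> real" where
  "iter_pd is f = foldr pd is f"

definition smooth_fun :: "(real^'n::finite \<Rightarrow> real) \<Rightarrow> bool" where
  "smooth_fun f \<longleftrightarrow> (\<forall>is x. iter_pd is f differentiable (at x))"

definition test_fun :: "(real^'n::finite) set \<Rightarrow> (real^'n \<Rightarrow> real) \<Rightarrow> bool" where
  "test_fun \<Omega> \<phi> \<longleftrightarrow> smooth_fun \<phi> \<and> compact (closure {x. \<phi> x \<noteq> 0}) \<and>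
     closure {x. \<phi> x \<noteq> 0} \<subseteq> \<Omega>"

definition cgrad :: "(real^'n::finite \<Rightarrow> real) \<Rightarrow> real^'n \<Rightarrow> real^'n" where
  "cgrad f x = (\<chi> j. pd j f x)"

definition chess :: "(real^'n::finite \<Rightarrow> real) \<Rightarrow> real^'n \<Rightarrow> real^'n^'n" where
  "chess f x = (\<chi> i j. pd i (pd j f) x)"

text \<open>u is the H^2-limit of test functions, with limiting gradient g and Hessian H
  (H^2_0(Omega) = closure of C_c^infty(Omega) in H^2(Omega)).\<close>
definition H20_approx :: "(real^'n::finite) set \<Rightarrow> (real^'n \<Rightarrow> real) \<Rightarrow> (real^'n \<Rightarrow> real^'n)
    \<Rightarrow> (real^'n \<Rightarrow> real^'n^'n) \<Rightarrow> bool" where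
  "H20_approx \<Omega> u g H \<longleftrightarrow> Lp_on 2 \<Omega> u \<and> Lp_on 2 \<Omega> g \<and> Lp_on 2 \<Omega> H \<and>
     (\<exists>\<phi>::nat \<Rightarrow> real^'n \<Rightarrow> real. (\<forall>n. test_fun \<Omega> (\<phi> n)) \<and>
        (\<lambda>n. Lp_norm 2 \<Omega> (\<lambda>x. \<phi> n x - u x)) \<longlonglongrightarrow> 0 \<and>
        (\<lambda>n. Lp_norm 2 \<Omega> (\<lambda>x. cgrad (\<phi> n) x - g x)) \<longlonglongrightarrow> 0 \<and>
        (\<lambda>n. Lp_norm 2 \<Omega> (\<lambda>x. chess (\<phi> n) x - H x)) \<longlonglongrightarrow> 0)"

definition H20 :: "(real^'n::finite) set \<Rightarrow> (real^'n \<Rightarrow> real) \<Rightarrow> bool" where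
  "H20 \<Omega> u \<longleftrightarrow> (\<exists>g H. H20_approx \<Omega> u g H)"

definition wgrad :: "(real^'n::finite) set \<Rightarrow> (real^'n \<Rightarrow> real) \<Rightarrow> real^'n \<Rightarrow> real^'n" where
  "wgrad \<Omega> u = fst (SOME (g, H). H20_approx \<Omega> u g H)"

definition whess :: "(real^'n::finite) set \<Rightarrow> (real^'n \<Rightarrow> real) \<Rightarrow> real^'n \<Rightarrow> real^'n^'n" where
  "whess \<Omega> u = snd (SOME (g, H). H20_approx \<Omega> u g H)"

definition H2_norm :: "(real^'n::finite) set \<Rightarrow> (real^'n \<Rightarrow> real) \<Rightarrow> real" where
  "H2_norm \<Omega> u = sqrt ((Lp_norm 2 \<Omega> u)\<^sup>2 + (Lp_norm 2 \<Omega> (wgrad \<Omega> u))\<^sup>2 + (Lp_norm 2 \<Omega> (whess \<Omega> u))\<^sup>2)"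

definition H2_seminorm :: "(real^'n::finite) set \<Rightarrow> (real^'n \<Rightarrow> real) \<Rightarrow> real" where
  "H2_seminorm \<Omega> u = Lp_norm 2 \<Omega> (whess \<Omega> u)"

definition H20k :: "(real^'n::finite) set \<Rightarrow> ('k::finite \<Rightarrow> real^'n \<Rightarrow> real) \<Rightarrow> bool" where
  "H20k \<Omega> u \<longleftrightarrow> (\<forall>i. H20 \<Omega> (u i))"

definition H2k_norm :: "(real^'n::finite) set \<Rightarrow> ('k::finite \<Rightarrow> real^'n \<Rightarrow> real) \<Rightarrow> real" where
  "H2k_norm \<Omega> u = sqrt (\<Sum>i\<in>UNIV. (H2_norm \<Omega> (u i))\<^sup>2)"

definition dual_norm :: "(real^'n::finite) set \<Rightarrow> (('k::finite \<Rightarrow> real^'n \<Rightarrow> real) \<Rightarrow> real) \<Rightarrow> real" where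
  "dual_norm \<Omega> L = (SUP u\<in>{u. H20k \<Omega> u \<and> u \<noteq> (\<lambda>i x. 0)}. \<bar>L u\<bar> / H2k_norm \<Omega> u)"

definition cont_linear_functional :: "(real^'n::finite) set \<Rightarrow> (('k::finite \<Rightarrow> real^'n \<Rightarrow> real) \<Rightarrow> real) \<Rightarrow> bool" where
  "cont_linear_functional \<Omega> L \<longleftrightarrow>
     (\<forall>u v a b. H20k \<Omega> u \<and> H20k \<Omega> v \<longrightarrow>
        L (\<lambda>i. lincomb a (u i) b (v i)) = a * L u + b * L v) \<and>
     (\<exists>M. \<forall>u. H20k \<Omega> u \<longrightarrow> \<bar>L u\<bar> \<le> M * H2k_norm \<Omega> u)"

definition cont_bilinear_on :: "('a::euclidean_space) set \<Rightarrow> (('a \<Rightarrow> 'b::real_normed_vector) \<Rightarrow> ('a \<Rightarrow> 'b) \<Rightarrow> real) \<Rightarrow> bool" where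
  "cont_bilinear_on \<Omega> A \<longleftrightarrow>
     (\<forall>u v w a b. Lp_on 2 \<Omega> u \<and> Lp_on 2 \<Omega> v \<and> Lp_on 2 \<Omega> w \<longrightarrow>
        A (lincomb a u b v) w = a * A u w + b * A v w \<and>
        A w (lincomb a u b v) = a * A w u + b * A w v) \<and>
     (\<exists>M. \<forall>u v. Lp_on 2 \<Omega> u \<and> Lp_on 2 \<Omega> v \<longrightarrow>
        \<bar>A u v\<bar> \<le> M * Lp_norm 2 \<Omega> u * Lp_norm 2 \<Omega> v)"

definition cont_trilinear_on :: "('a::euclidean_space) set \<Rightarrow>
    (('a \<Rightarrow> 'b::real_normed_vector) \<Rightarrow> ('a \<Rightarrow> 'c::real_normed_vector) \<Rightarrow> ('a \<Rightarrow> 'c) \<Rightarrow> real) \<Rightarrow> bool" where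
  "cont_trilinear_on \<Omega> B \<longleftrightarrow>
     (\<forall>u u' v v' w w' a b. Lp_on 2 \<Omega> u \<and> Lp_on 2 \<Omega> u' \<and> Lp_on 4 \<Omega> v \<and> Lp_on 4 \<Omega> v'
          \<and> Lp_on 4 \<Omega> w \<and> Lp_on 4 \<Omega> w' \<longrightarrow>
        B (lincomb a u b u') v w = a * B u v w + b * B u' v w \<and>
        B u (lincomb a v b v') w = a * B u v w + b * B u v' w \<and>
        B u v (lincomb a w b w') = a * B u v w + b * B u v w') \<and>
     (\<exists>M. \<forall>u v w. Lp_on 2 \<Omega> u \<and> Lp_on 4 \<Omega> v \<and> Lp_on 4 \<Omega> w \<longrightarrow>
        \<bar>B u v w\<bar> \<le> M * Lp_norm 2 \<Omega> u * Lp_norm 4 \<Omega> v * Lp_norm 4 \<Omega> w)"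

definition trilinear_norm :: "('a::euclidean_space) set \<Rightarrow>
    (('a \<Rightarrow> 'b::real_normed_vector) \<Rightarrow> ('a \<Rightarrow> 'c::real_normed_vector) \<Rightarrow> ('a \<Rightarrow> 'c) \<Rightarrow> real) \<Rightarrow> real" where
  "trilinear_norm \<Omega> B = (SUP (u, v, w)\<in>{(u, v, w). Lp_on 2 \<Omega> u \<and> Lp_on 4 \<Omega> v \<and> Lp_on 4 \<Omega> w}.
      \<bar>B u v w\<bar> / (Lp_norm 2 \<Omega> u * Lp_norm 4 \<Omega> v * Lp_norm 4 \<Omega> w))"

definition disc_norm :: "(real^'n::finite) set \<Rightarrow> ('x \<Rightarrow> real^'n \<Rightarrow> real^'n^'n) \<Rightarrow> 'x \<Rightarrow> real" where
  "disc_norm \<Omega> Hd w = Lp_norm 2 \<Omega> (Hd w)"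

definition hessian_discretisation :: "(real^'n::finite) set \<Rightarrow> ('x::euclidean_space \<Rightarrow> real^'n \<Rightarrow> real)
    \<Rightarrow> ('x \<Rightarrow> real^'n \<Rightarrow> real^'n) \<Rightarrow> ('x \<Rightarrow> real^'n \<Rightarrow> real^'n^'n) \<Rightarrow> bool" where
  "hessian_discretisation \<Omega> Pd Gd Hd \<longleftrightarrow>
     (\<forall>w. Lp_on 2 \<Omega> (Pd w)) \<and> (\<forall>w. Lp_on 4 \<Omega> (Gd w)) \<and> (\<forall>w. Lp_on 2 \<Omega> (Hd w)) \<and>
     (\<forall>x. linear (\<lambda>w. Pd w x)) \<and> (\<forall>x. linear (\<lambda>w. Gd w x)) \<and> (\<forall>x. linear (\<lambda>w. Hd w x)) \<and>
     (\<forall>w. disc_norm \<Omega> Hd w = 0 \<longrightarrow> w = 0)"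

definition companion :: "(real^'n::finite) set \<Rightarrow> ('x::euclidean_space \<Rightarrow> real^'n \<Rightarrow> real) \<Rightarrow> bool" where
  "companion \<Omega> Ed \<longleftrightarrow> (\<forall>w. H20 \<Omega> (Ed w)) \<and> (\<forall>x. linear (\<lambda>w. Ed w x))"

definition Gamma_E :: "(real^'n::finite) set \<Rightarrow> ('x::euclidean_space \<Rightarrow> real^'n \<Rightarrow> real^'n^'n)
    \<Rightarrow> ('x \<Rightarrow> real^'n \<Rightarrow> real) \<Rightarrow> real" where
  "Gamma_E \<Omega> Hd Ed = (SUP \<psi>\<in>UNIV - {0}. Lp_norm 2 \<Omega> (whess \<Omega> (Ed \<psi>)) / disc_norm \<Omega> Hd \<psi>)"

definition Gamma_finite :: "(real^'n::finite) set \<Rightarrow> ('x::euclidean_space \<Rightarrow> real^'n \<Rightarrow> real^'n^'n)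
    \<Rightarrow> ('x \<Rightarrow> real^'n \<Rightarrow> real) \<Rightarrow> bool" where
  "Gamma_finite \<Omega> Hd Ed \<longleftrightarrow>
     bdd_above ((\<lambda>\<psi>. Lp_norm 2 \<Omega> (whess \<Omega> (Ed \<psi>)) / disc_norm \<Omega> Hd \<psi>) ` (UNIV - {0}))"

definition C_disc :: "(real^'n::finite) set \<Rightarrow> ('x::euclidean_space \<Rightarrow> real^'n \<Rightarrow> real)
    \<Rightarrow> ('x \<Rightarrow> real^'n \<Rightarrow> real^'n) \<Rightarrow> ('x \<Rightarrow> real^'n \<Rightarrow> real^'n^'n) \<Rightarrow> real" where
  "C_disc \<Omega> Pd Gd Hd = (SUP w\<in>UNIV - {0}.
      max (Lp_norm 2 \<Omega> (Pd w) / disc_norm \<Omega> Hd w) (Lp_norm 4 \<Omega> (Gd w) / disc_norm \<Omega> Hd w))"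

text \<open>Componentwise action on k-tuples: a k-tuple of fields is one field with values in V^k.\<close>
definition compw :: "('x \<Rightarrow> 'a \<Rightarrow> 'b) \<Rightarrow> 'x^'k \<Rightarrow> 'a \<Rightarrow> 'b^'k" where
  "compw F \<Psi> = (\<lambda>x. \<chi> i. F (\<Psi> $ i) x)"

definition hessian_scheme_sol :: "(((real^'n::finite) \<Rightarrow> (real^'n^'n)^'k::finite) \<Rightarrow> (real^'n \<Rightarrow> (real^'n^'n)^'k) \<Rightarrow> real)
    \<Rightarrow> ((real^'n \<Rightarrow> (real^'n^'n)^'k) \<Rightarrow> (real^'n \<Rightarrow> (real^'n)^'k) \<Rightarrow> (real^'n \<Rightarrow> (real^'n)^'k) \<Rightarrow> real)
    \<Rightarrow> (('k \<Rightarrow> real^'n \<Rightarrow> real) \<Rightarrow> real)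
    \<Rightarrow> ('x \<Rightarrow> real^'n \<Rightarrow> real^'n) \<Rightarrow> ('x \<Rightarrow> real^'n \<Rightarrow> real^'n^'n) \<Rightarrow> ('x \<Rightarrow> real^'n \<Rightarrow> real)
    \<Rightarrow> 'x^'k \<Rightarrow> bool" where
  "hessian_scheme_sol A B L Gd Hd Ed \<Psi> \<longleftrightarrow>
     (\<forall>\<Phi>. A (compw Hd \<Psi>) (compw Hd \<Phi>) + B (compw Hd \<Psi>) (compw Gd \<Psi>) (compw Gd \<Phi>)
            = L (\<lambda>i. Ed (\<Phi> $ i)))"

end

theory Submission
  imports Defs
begin

lemma powr2_eq: "0 \<le> (t::real) \<Longrightarrow> t powr 2 = t^2"
  by (cases "t = 0") (simp_all add: powr_numeral)

lemma powr4_eq: "0 \<le> (t::real) \<Longrightarrow> t powr 4 = t^4"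
  by (cases "t = 0") (simp_all add: powr_numeral)

lemma Lp2_on_iff: "Lp_on 2 \<Omega> f \<longleftrightarrow> f \<in> borel_measurable (lebesgue_on \<Omega>) \<and>
   integrable (lebesgue_on \<Omega>) (\<lambda>x. (norm (f x))\<^sup>2)"
  unfolding Lp_on_def by (simp add: powr2_eq)

lemma Lp4_on_iff: "Lp_on 4 \<Omega> f \<longleftrightarrow> f \<in> borel_measurable (lebesgue_on \<Omega>) \<and>
   integrable (lebesgue_on \<Omega>) (\<lambda>x. (norm (f x))^4)"
  unfolding Lp_on_def by (simp add: powr4_eq)

lemma Lp2_norm: "Lp_norm 2 \<Omega> f = sqrt (\<integral>x. (norm (f x))\<^sup>2 \<partial>lebesgue_on \<Omega>)"
proof -
  have "0 \<le> (\<integral>x. (norm (f x))\<^sup>2 \<partial>lebesgue_on \<Omega>)" by (simp add: integral_nonneg_AE)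
  then show ?thesis unfolding Lp_norm_def by (simp add: powr2_eq powr_half_sqrt)
qed

lemma Lp4_norm: "Lp_norm 4 \<Omega> f = (\<integral>x. (norm (f x))^4 \<partial>lebesgue_on \<Omega>) powr (1/4)"
  unfolding Lp_norm_def by (simp add: powr4_eq)

lemma Lp_norm_nonneg: "0 \<le> Lp_norm p \<Omega> f"
  unfolding Lp_norm_def by simp

lemma Lp_norm_zero: "p \<noteq> 0 \<Longrightarrow> Lp_norm p \<Omega> (\<lambda>x. 0) = 0"
  unfolding Lp_norm_def by simp

lemma lin_pt:
  fixes F :: "'x::real_vector \<Rightarrow> 'a \<Rightarrow> 'b::real_vector"
  assumes "linear (\<lambda>w. F w x)"
  shows "F (a *\<^sub>R u + b *\<^sub>R v) x = a *\<^sub>R F u x + b *\<^sub>R F v x"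
    and "F (c *\<^sub>R u) x = c *\<^sub>R F u x" and "F 0 x = 0"
    and "F (u + v) x = F u x + F v x" and "F (u - v) x = F u x - F v x"
proof -
  interpret linear "\<lambda>w. F w x" by fact
  show "F (a *\<^sub>R u + b *\<^sub>R v) x = a *\<^sub>R F u x + b *\<^sub>R F v x" using add scale by simp
  show "F (c *\<^sub>R u) x = c *\<^sub>R F u x" using scale by simp
  show "F 0 x = 0" using zero by simp
  show "F (u + v) x = F u x + F v x" using add by simp
  show "F (u - v) x = F u x - F v x" using diff by simp
qed

lemma lin_repr:
  fixes F :: "'x::euclidean_space \<Rightarrow> 'a \<Rightarrow> 'b::real_vector"
  assumes "linear (\<lambda>w. F w x)"
  shows "F w x = (\<Sum>b\<in>Basis. (w \<bullet> b) *\<^sub>R F b x)"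
proof -
  have "F w x = (\<lambda>w. F w x) (\<Sum>b\<in>Basis. (w \<bullet> b) *\<^sub>R b)" by (simp add: euclidean_representation)
  also have "\<dots> = (\<Sum>b\<in>Basis. (w \<bullet> b) *\<^sub>R F b x)"
    using linear_sum[OF assms, of "\<lambda>b. (w \<bullet> b) *\<^sub>R b" Basis] linear_scale[OF assms] by simp
  finally show ?thesis .
qed

lemma lin_norm_bound:
  fixes F :: "'x::euclidean_space \<Rightarrow> 'a \<Rightarrow> 'b::real_normed_vector"
  assumes "linear (\<lambda>w. F w x)"
  shows "norm (F w x) \<le> norm w * (\<Sum>b\<in>Basis. norm (F b x))"
proof -
  have "norm (F w x) = norm (\<Sum>b\<in>Basis. (w \<bullet> b) *\<^sub>R F b x)" using lin_repr[of F x w, OF assms] by metis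
  also have "\<dots> \<le> (\<Sum>b\<in>Basis. norm ((w \<bullet> b) *\<^sub>R F b x))" by (rule norm_sum)
  also have "\<dots> \<le> (\<Sum>b\<in>Basis. norm w * norm (F b x))"
    by (rule sum_mono) (simp add: Basis_le_norm mult_right_mono)
  finally show ?thesis by (simp add: sum_distrib_left)
qed

lemma L2_inner_integrable:
  fixes f g :: "'a::euclidean_space \<Rightarrow> 'b::euclidean_space"
  assumes "Lp_on 2 \<Omega> f" "Lp_on 2 \<Omega> g"
  shows "integrable (lebesgue_on \<Omega>) (\<lambda>x. inner (f x) (g x))"
proof (rule Bochner_Integration.integrable_bound[where f="\<lambda>x. (norm (f x))\<^sup>2 + (norm (g x))\<^sup>2"])
  show "integrable (lebesgue_on \<Omega>) (\<lambda>x. (norm (f x))\<^sup>2 + (norm (g x))\<^sup>2)"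
    using assms by (simp add: Lp2_on_iff)
  show "(\<lambda>x. f x \<bullet> g x) \<in> borel_measurable (lebesgue_on \<Omega>)"
    using assms by (simp add: Lp2_on_iff borel_measurable_inner)
  show "AE x in lebesgue_on \<Omega>. norm (f x \<bullet> g x) \<le> norm ((norm (f x))\<^sup>2 + (norm (g x))\<^sup>2)"
  proof (rule AE_I2)
    fix x
    have "\<bar>f x \<bullet> g x\<bar> \<le> norm (f x) * norm (g x)" by (rule Cauchy_Schwarz_ineq2)
    also have "\<dots> \<le> (norm (f x))\<^sup>2 + (norm (g x))\<^sup>2"
      using sum_squares_bound[of "norm (f x)" "norm (g x)"] mult_nonneg_nonneg[OF norm_ge_zero norm_ge_zero, of "f x" "g x"]
      by linarith
    finally show "norm (f x \<bullet> g x) \<le> norm ((norm (f x))\<^sup>2 + (norm (g x))\<^sup>2)"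
      by (simp only: real_norm_def)
  qed
qed

lemma norm_equiv_below:
  fixes q :: "'x::euclidean_space \<Rightarrow> real"
  assumes cont: "continuous_on UNIV q"
    and hom: "\<And>c w. q (c *\<^sub>R w) = c\<^sup>2 * q w"
    and pos: "\<And>w. w \<noteq> 0 \<Longrightarrow> q w > 0"
  shows "\<exists>m>0. \<forall>w. m * (norm w)\<^sup>2 \<le> q w"
proof -
  obtain b :: 'x where b: "b \<in> Basis" using nonempty_Basis by blast
  have "sphere 0 1 \<noteq> ({} :: 'x set)" using b by (auto simp: sphere_def intro!: exI[of _ b])
  then obtain w0 where w0: "w0 \<in> sphere (0::'x) 1" "\<forall>y\<in>sphere 0 1. q w0 \<le> q y"
    using continuous_attains_inf[OF compact_sphere _ continuous_on_subset[OF cont]] by blast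
  have "w0 \<noteq> 0" using w0 by auto
  then have m: "q w0 > 0" by (rule pos)
  have "q w0 * (norm w)\<^sup>2 \<le> q w" for w
  proof (cases "w = 0")
    case True
    then show ?thesis using hom[of 0 w] by simp
  next
    case False
    have "(inverse (norm w)) *\<^sub>R w \<in> sphere 0 1" using False by simp
    then have "q w0 \<le> q ((inverse (norm w)) *\<^sub>R w)" using w0 by blast
    also have "\<dots> = (inverse (norm w))\<^sup>2 * q w" by (rule hom)
    finally have "q w0 \<le> (inverse (norm w))\<^sup>2 * q w" .
    then have "q w0 * (norm w)\<^sup>2 \<le> (inverse (norm w))\<^sup>2 * q w * (norm w)\<^sup>2"
      by (simp add: mult_right_mono)
    also have "\<dots> = q w" using False by (simp add: field_simps)
    finally show ?thesis .
  qed
  then show ?thesis using m by blast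
qed

lemma quad_form_lower:
  fixes Hd :: "'x::euclidean_space \<Rightarrow> 'a::euclidean_space \<Rightarrow> 'b::euclidean_space"
  assumes L2: "\<forall>w. Lp_on 2 \<Omega> (Hd w)" and lin: "\<forall>x. linear (\<lambda>w. Hd w x)"
    and nz: "\<forall>w. Lp_norm 2 \<Omega> (Hd w) = 0 \<longrightarrow> w = 0"
  shows "\<exists>c>0. \<forall>w. c * norm w \<le> Lp_norm 2 \<Omega> (Hd w)"
proof -
  define M where "M = lebesgue_on \<Omega>"
  define q where "q w = (\<integral>x. (norm (Hd w x))\<^sup>2 \<partial>M)" for w
  define K where "K b c = (\<integral>x. Hd b x \<bullet> Hd c x \<partial>M)" for b c
  have Lq: "Lp_norm 2 \<Omega> (Hd w) = sqrt (q w)" for w unfolding q_def M_def by (rule Lp2_norm)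
  have pw: "(norm (Hd w x))\<^sup>2 = (\<Sum>b\<in>Basis. \<Sum>c\<in>Basis. (w \<bullet> b) * (w \<bullet> c) * (Hd b x \<bullet> Hd c x))" for w x
  proof -
    have "(norm (Hd w x))\<^sup>2 = Hd w x \<bullet> Hd w x" by (simp add: power2_norm_eq_inner)
    also have "\<dots> = (\<Sum>b\<in>Basis. (w \<bullet> b) *\<^sub>R Hd b x) \<bullet> (\<Sum>c\<in>Basis. (w \<bullet> c) *\<^sub>R Hd c x)"
      using lin_repr[of Hd x w] lin by metis
    also have "\<dots> = (\<Sum>b\<in>Basis. \<Sum>c\<in>Basis. (w \<bullet> b) * (w \<bullet> c) * (Hd b x \<bullet> Hd c x))"
      apply (simp add: inner_sum_left inner_sum_right sum_distrib_left mult.assoc)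
      apply (subst sum.swap)
      apply (simp add: mult.left_commute)
      done
    finally show ?thesis .
  qed
  have integ: "integrable M (\<lambda>x. Hd b x \<bullet> Hd c x)" for b c
    unfolding M_def using L2 by (intro L2_inner_integrable) auto
  have expand: "q w = (\<Sum>b\<in>Basis. \<Sum>c\<in>Basis. (w \<bullet> b) * (w \<bullet> c) * K b c)" for w
    unfolding q_def pw K_def
    by (simp add: integral_sum integ integral_mult_right_zero integrable_sum)
  have cont: "continuous_on UNIV q"
    unfolding expand[abs_def] by (intro continuous_intros)
  have hom: "q (c *\<^sub>R w) = c\<^sup>2 * q w" for c w
  proof -
    have "Hd (c *\<^sub>R w) x = c *\<^sub>R Hd w x" for x using lin lin_pt(2) by metis
    then show ?thesis unfolding q_def by (simp add: power_mult_distrib)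
  qed
  have qnn: "0 \<le> q w" for w unfolding q_def by (simp add: integral_nonneg_AE)
  have pos: "w \<noteq> 0 \<Longrightarrow> q w > 0" for w
    using nz Lq qnn[of w] by (metis less_eq_real_def real_sqrt_zero)
  obtain m where m: "m > 0" "\<forall>w. m * (norm w)\<^sup>2 \<le> q w"
    using norm_equiv_below[OF cont hom pos] by blast
  have "sqrt m * norm w \<le> Lp_norm 2 \<Omega> (Hd w)" for w
  proof -
    have "sqrt m * norm w = sqrt (m * (norm w)\<^sup>2)" using m by (simp add: real_sqrt_mult)
    also have "\<dots> \<le> sqrt (q w)" using m by (simp add: real_sqrt_le_mono)
    finally show ?thesis using Lq by simp
  qed
  then show ?thesis using m by (intro exI[of _ "sqrt m"]) auto
qed

lemma sum_sq_card:
  fixes a :: "'b \<Rightarrow> real"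
  shows "(\<Sum>b\<in>S. a b)\<^sup>2 \<le> real (card S) * (\<Sum>b\<in>S. (a b)\<^sup>2)"
  using Cauchy_Schwarz_ineq_sum[of a "\<lambda>_. 1" S] by (simp add: mult.commute)

lemma sum_4_card:
  fixes a :: "'b \<Rightarrow> real"
  assumes "\<And>b. 0 \<le> a b"
  shows "(\<Sum>b\<in>S. a b)^4 \<le> real (card S)^3 * (\<Sum>b\<in>S. (a b)^4)"
proof -
  have "(\<Sum>b\<in>S. a b)^4 = ((\<Sum>b\<in>S. a b)\<^sup>2)\<^sup>2" by simp
  also have "\<dots> \<le> (real (card S) * (\<Sum>b\<in>S. (a b)\<^sup>2))\<^sup>2"
    by (rule power_mono[OF sum_sq_card]) simp
  also have "\<dots> = (real (card S))\<^sup>2 * (\<Sum>b\<in>S. ((a b)\<^sup>2))\<^sup>2" by (simp add: power_mult_distrib)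
  also have "\<dots> \<le> (real (card S))\<^sup>2 * (real (card S) * (\<Sum>b\<in>S. ((a b)\<^sup>2)\<^sup>2))"
    by (rule mult_left_mono[OF sum_sq_card]) simp
  also have "\<dots> = real (card S)^3 * (\<Sum>b\<in>S. (a b)^4)"
  proof -
    have "((a b)\<^sup>2)\<^sup>2 = (a b)^4" for b by (simp flip: power_mult)
    then show ?thesis by (simp add: power2_eq_square power3_eq_cube mult.assoc)
  qed
  finally show ?thesis .
qed

lemma pow4_powr: "0 \<le> (t::real) \<Longrightarrow> (t^4) powr (1/4) = t"
proof (cases "t = 0")
  case False
  assume "0 \<le> t"
  then have "t > 0" using False by simp
  then have "t^4 = t powr 4" by (simp add: powr_numeral)
  then have "(t^4) powr (1/4) = t powr (4 * (1/4))" by (simp add: powr_powr)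
  then show ?thesis using \<open>t > 0\<close> by simp
qed simp

lemma upper_L4:
  fixes Gd :: "'x::euclidean_space \<Rightarrow> 'a::euclidean_space \<Rightarrow> 'b::euclidean_space"
  assumes L4: "\<forall>w. Lp_on 4 \<Omega> (Gd w)" and lin: "\<forall>x. linear (\<lambda>w. Gd w x)"
  shows "\<exists>K\<ge>0. \<forall>w. Lp_norm 4 \<Omega> (Gd w) \<le> K * norm w"
proof -
  define M where "M = lebesgue_on \<Omega>"
  define S where "S x = (\<Sum>b\<in>Basis. norm (Gd b x))" for x
  have meas: "Gd b \<in> borel_measurable M" for b using L4 unfolding M_def Lp4_on_iff by blast
  have int4: "integrable M (\<lambda>x. (norm (Gd b x))^4)" for b using L4 unfolding M_def Lp4_on_iff by blast
  have intS: "integrable M (\<lambda>x. (S x)^4)"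
  proof (rule Bochner_Integration.integrable_bound[where f="\<lambda>x. real (card (Basis::'x set))^3 * (\<Sum>b\<in>Basis. (norm (Gd b x))^4)"])
    show "integrable M (\<lambda>x. real (card (Basis::'x set))^3 * (\<Sum>b\<in>Basis. (norm (Gd b x))^4))"
      using int4 by (intro integrable_mult_right integrable_sum) auto
    show "(\<lambda>x. (S x)^4) \<in> borel_measurable M" unfolding S_def using meas by measurable
    show "AE x in M. norm ((S x)^4) \<le> norm (real (card (Basis::'x set))^3 * (\<Sum>b\<in>Basis. (norm (Gd b x))^4))"
    proof (rule AE_I2)
      fix x
      have "(S x)^4 \<le> real (card (Basis::'x set))^3 * (\<Sum>b\<in>Basis. (norm (Gd b x))^4)"
        unfolding S_def by (rule sum_4_card) simp
      moreover have "0 \<le> S x" unfolding S_def by (simp add: sum_nonneg)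
      ultimately show "norm ((S x)^4) \<le> norm (real (card (Basis::'x set))^3 * (\<Sum>b\<in>Basis. (norm (Gd b x))^4))"
        by simp
    qed
  qed
  define I where "I = (\<integral>x. (S x)^4 \<partial>M)"
  have I0: "0 \<le> I" unfolding I_def S_def by (simp add: integral_nonneg_AE sum_nonneg)
  have "Lp_norm 4 \<Omega> (Gd w) \<le> I powr (1/4) * norm w" for w
  proof -
    have "(\<integral>x. (norm (Gd w x))^4 \<partial>M) \<le> (\<integral>x. (norm w)^4 * (S x)^4 \<partial>M)"
    proof (rule integral_mono)
      show "integrable M (\<lambda>x. (norm (Gd w x))^4)" by (rule int4)
      show "integrable M (\<lambda>x. (norm w)^4 * (S x)^4)" using intS by simp
      fix x
      have "norm (Gd w x) \<le> norm w * S x" unfolding S_def using lin_norm_bound[of Gd x w] lin by blast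
      then have "(norm (Gd w x))^4 \<le> (norm w * S x)^4" by (rule power_mono) simp
      then show "(norm (Gd w x))^4 \<le> (norm w)^4 * (S x)^4" by (simp add: power_mult_distrib)
    qed
    also have "\<dots> = (norm w)^4 * I" unfolding I_def by simp
    finally have le: "(\<integral>x. (norm (Gd w x))^4 \<partial>M) \<le> (norm w)^4 * I" .
    have "Lp_norm 4 \<Omega> (Gd w) = (\<integral>x. (norm (Gd w x))^4 \<partial>M) powr (1/4)"
      unfolding M_def by (rule Lp4_norm)
    also have "\<dots> \<le> ((norm w)^4 * I) powr (1/4)"
      by (rule powr_mono2) (auto simp: le integral_nonneg_AE)
    also have "\<dots> = norm w * I powr (1/4)" using I0 by (simp add: powr_mult pow4_powr)
    finally show ?thesis by (simp add: mult.commute)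
  qed
  then show ?thesis using I0 by (intro exI[of _ "I powr (1/4)"]) auto
qed

lemma upper_L2:
  fixes Pd :: "'x::euclidean_space \<Rightarrow> 'a::euclidean_space \<Rightarrow> 'b::euclidean_space"
  assumes L2: "\<forall>w. Lp_on 2 \<Omega> (Pd w)" and lin: "\<forall>x. linear (\<lambda>w. Pd w x)"
  shows "\<exists>K\<ge>0. \<forall>w. Lp_norm 2 \<Omega> (Pd w) \<le> K * norm w"
proof -
  define M where "M = lebesgue_on \<Omega>"
  define S where "S x = (\<Sum>b\<in>Basis. norm (Pd b x))" for x
  have meas: "Pd b \<in> borel_measurable M" for b using L2 unfolding M_def Lp2_on_iff by blast
  have int2: "integrable M (\<lambda>x. (norm (Pd b x))\<^sup>2)" for b using L2 unfolding M_def Lp2_on_iff by blast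
  have intS: "integrable M (\<lambda>x. (S x)\<^sup>2)"
  proof (rule Bochner_Integration.integrable_bound[where f="\<lambda>x. real (card (Basis::'x set)) * (\<Sum>b\<in>Basis. (norm (Pd b x))\<^sup>2)"])
    show "integrable M (\<lambda>x. real (card (Basis::'x set)) * (\<Sum>b\<in>Basis. (norm (Pd b x))\<^sup>2))"
      using int2 by (intro integrable_mult_right integrable_sum) auto
    show "(\<lambda>x. (S x)\<^sup>2) \<in> borel_measurable M" unfolding S_def using meas by measurable
    show "AE x in M. norm ((S x)\<^sup>2) \<le> norm (real (card (Basis::'x set)) * (\<Sum>b\<in>Basis. (norm (Pd b x))\<^sup>2))"
    proof (rule AE_I2)
      fix x
      have "(S x)\<^sup>2 \<le> real (card (Basis::'x set)) * (\<Sum>b\<in>Basis. (norm (Pd b x))\<^sup>2)"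
        unfolding S_def by (rule sum_sq_card)
      moreover have "0 \<le> real (card (Basis::'x set)) * (\<Sum>b\<in>Basis. (norm (Pd b x))\<^sup>2)"
        by (simp add: sum_nonneg)
      ultimately show "norm ((S x)\<^sup>2) \<le> norm (real (card (Basis::'x set)) * (\<Sum>b\<in>Basis. (norm (Pd b x))\<^sup>2))"
        by simp
    qed
  qed
  define I where "I = (\<integral>x. (S x)\<^sup>2 \<partial>M)"
  have I0: "0 \<le> I" unfolding I_def S_def by (simp add: integral_nonneg_AE sum_nonneg)
  have "Lp_norm 2 \<Omega> (Pd w) \<le> sqrt I * norm w" for w
  proof -
    have "(\<integral>x. (norm (Pd w x))\<^sup>2 \<partial>M) \<le> (\<integral>x. (norm w)\<^sup>2 * (S x)\<^sup>2 \<partial>M)"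
    proof (rule integral_mono)
      show "integrable M (\<lambda>x. (norm (Pd w x))\<^sup>2)" by (rule int2)
      show "integrable M (\<lambda>x. (norm w)\<^sup>2 * (S x)\<^sup>2)" using intS by simp
      fix x
      have "norm (Pd w x) \<le> norm w * S x" unfolding S_def using lin_norm_bound[of Pd x w] lin by blast
      then have "(norm (Pd w x))\<^sup>2 \<le> (norm w * S x)\<^sup>2" by (rule power_mono) simp
      then show "(norm (Pd w x))\<^sup>2 \<le> (norm w)\<^sup>2 * (S x)\<^sup>2" by (simp add: power_mult_distrib)
    qed
    also have "\<dots> = (norm w)\<^sup>2 * I" unfolding I_def by simp
    finally have le: "(\<integral>x. (norm (Pd w x))\<^sup>2 \<partial>M) \<le> (norm w)\<^sup>2 * I" .
    have "Lp_norm 2 \<Omega> (Pd w) = sqrt (\<integral>x. (norm (Pd w x))\<^sup>2 \<partial>M)"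
      unfolding M_def by (rule Lp2_norm)
    also have "\<dots> \<le> sqrt ((norm w)\<^sup>2 * I)" using le by (rule real_sqrt_le_mono)
    also have "\<dots> = norm w * sqrt I" by (simp add: real_sqrt_mult)
    finally show ?thesis by (simp add: mult.commute)
  qed
  then show ?thesis using I0 by (intro exI[of _ "sqrt I"]) auto
qed

lemma disc_nonneg: "0 \<le> disc_norm \<Omega> Hd w"
  unfolding disc_norm_def by (rule Lp_norm_nonneg)

lemma disc_pos:
  assumes HD: "hessian_discretisation \<Omega> Pd Gd Hd" and "w \<noteq> 0"
  shows "0 < disc_norm \<Omega> Hd w"
  using HD assms(2) disc_nonneg[of \<Omega> Hd w] unfolding hessian_discretisation_def
  by (metis less_eq_real_def)

lemma disc_lower:
  assumes HD: "hessian_discretisation \<Omega> Pd Gd Hd"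
  shows "\<exists>c>0. \<forall>w. c * norm w \<le> disc_norm \<Omega> Hd w"
  using HD unfolding hessian_discretisation_def disc_norm_def
  by (intro quad_form_lower) auto

lemma C_disc_bound:
  fixes \<Omega> :: "(real^'n::finite) set" and Pd :: "'x::euclidean_space \<Rightarrow> real^'n \<Rightarrow> real"
  assumes HD: "hessian_discretisation \<Omega> Pd Gd Hd"
  shows "0 \<le> C_disc \<Omega> Pd Gd Hd"
    and "Lp_norm 4 \<Omega> (Gd w) \<le> C_disc \<Omega> Pd Gd Hd * disc_norm \<Omega> Hd w"
proof -
  obtain c where c: "c > 0" "\<forall>w. c * norm w \<le> disc_norm \<Omega> Hd w" using disc_lower[OF HD] by blast
  obtain K4 where K4: "K4 \<ge> 0" "\<forall>w. Lp_norm 4 \<Omega> (Gd w) \<le> K4 * norm w"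
    using HD unfolding hessian_discretisation_def by (metis upper_L4)
  obtain K2 where K2: "K2 \<ge> 0" "\<forall>w. Lp_norm 2 \<Omega> (Pd w) \<le> K2 * norm w"
    using HD unfolding hessian_discretisation_def by (metis upper_L2)
  define R where "R w = max (Lp_norm 2 \<Omega> (Pd w) / disc_norm \<Omega> Hd w) (Lp_norm 4 \<Omega> (Gd w) / disc_norm \<Omega> Hd w)" for w
  have Rb: "R w \<le> max K2 K4 / c" if "w \<noteq> 0" for w
  proof -
    have nw: "norm w > 0" using that by simp
    have d: "c * norm w \<le> disc_norm \<Omega> Hd w" using c by blast
    have dpos: "0 < c * norm w" using c nw by simp
    have "Lp_norm 2 \<Omega> (Pd w) / disc_norm \<Omega> Hd w \<le> K2 * norm w / (c * norm w)"
      using K2 d dpos by (intro frac_le) (auto simp: Lp_norm_nonneg)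
    also have "\<dots> = K2 / c" using nw by simp
    also have "\<dots> \<le> max K2 K4 / c" using c by (simp add: divide_right_mono)
    finally have 1: "Lp_norm 2 \<Omega> (Pd w) / disc_norm \<Omega> Hd w \<le> max K2 K4 / c" .
    have "Lp_norm 4 \<Omega> (Gd w) / disc_norm \<Omega> Hd w \<le> K4 * norm w / (c * norm w)"
      using K4 d dpos by (intro frac_le) (auto simp: Lp_norm_nonneg)
    also have "\<dots> = K4 / c" using nw by simp
    also have "\<dots> \<le> max K2 K4 / c" using c by (simp add: divide_right_mono)
    finally have 2: "Lp_norm 4 \<Omega> (Gd w) / disc_norm \<Omega> Hd w \<le> max K2 K4 / c" .
    show ?thesis unfolding R_def using 1 2 by simp
  qed
  have bdd: "bdd_above (R ` (UNIV - {0}))" using Rb by (intro bdd_aboveI[of _ "max K2 K4 / c"]) auto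
  have RC: "R w \<le> C_disc \<Omega> Pd Gd Hd" if "w \<noteq> 0" for w
    unfolding C_disc_def R_def[symmetric] using that by (intro cSUP_upper[OF _ bdd]) auto
  have Rnn: "0 \<le> R w" for w unfolding R_def by (metis Lp_norm_nonneg disc_nonneg divide_nonneg_nonneg max.coboundedI1)
  obtain b :: 'x where b: "b \<in> Basis" using nonempty_Basis by blast
  then have "b \<noteq> 0" by auto
  show C0: "0 \<le> C_disc \<Omega> Pd Gd Hd" using RC[OF \<open>b \<noteq> 0\<close>] Rnn[of b] by linarith
  show "Lp_norm 4 \<Omega> (Gd w) \<le> C_disc \<Omega> Pd Gd Hd * disc_norm \<Omega> Hd w"
  proof (cases "w = 0")
    case True
    have "Gd w = (\<lambda>x. 0)" using HD True unfolding hessian_discretisation_def by (intro ext) (metis lin_pt(3))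
    then show ?thesis using C0 by (simp add: Lp_norm_zero disc_nonneg)
  next
    case False
    have dp: "0 < disc_norm \<Omega> Hd w" by (rule disc_pos[OF HD False])
    have "Lp_norm 4 \<Omega> (Gd w) / disc_norm \<Omega> Hd w \<le> C_disc \<Omega> Pd Gd Hd"
      using RC[OF False] unfolding R_def by simp
    then show ?thesis using dp by (simp add: divide_le_eq)
  qed
qed

lemma Gamma_bound:
  fixes Ed :: "'x::euclidean_space \<Rightarrow> real^'n::finite \<Rightarrow> real"
  assumes HD: "hessian_discretisation \<Omega> Pd Gd Hd" and GF: "Gamma_finite \<Omega> Hd Ed"
  shows "0 \<le> Gamma_E \<Omega> Hd Ed"
    and "\<psi> \<noteq> 0 \<Longrightarrow> Lp_norm 2 \<Omega> (whess \<Omega> (Ed \<psi>)) \<le> Gamma_E \<Omega> Hd Ed * disc_norm \<Omega> Hd \<psi>"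
proof -
  have RC: "Lp_norm 2 \<Omega> (whess \<Omega> (Ed w)) / disc_norm \<Omega> Hd w \<le> Gamma_E \<Omega> Hd Ed" if "w \<noteq> 0" for w
    unfolding Gamma_E_def using that GF unfolding Gamma_finite_def by (intro cSUP_upper) auto
  obtain b :: 'x where b: "b \<in> Basis" using nonempty_Basis by blast
  then have "b \<noteq> 0" by auto
  show "0 \<le> Gamma_E \<Omega> Hd Ed" using RC[OF \<open>b \<noteq> 0\<close>]
    by (smt (verit) Lp_norm_nonneg disc_nonneg divide_nonneg_nonneg)
  assume "\<psi> \<noteq> 0"
  then show "Lp_norm 2 \<Omega> (whess \<Omega> (Ed \<psi>)) \<le> Gamma_E \<Omega> Hd Ed * disc_norm \<Omega> Hd \<psi>"
    using RC[of \<psi>] disc_pos[OF HD \<open>\<psi> \<noteq> 0\<close>] by (simp add: divide_le_eq)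
qed

lemma tri_bound:
  fixes B :: "('a::euclidean_space \<Rightarrow> 'b::real_normed_vector) \<Rightarrow> ('a \<Rightarrow> 'c::real_normed_vector) \<Rightarrow> ('a \<Rightarrow> 'c) \<Rightarrow> real"
  assumes BC: "cont_trilinear_on \<Omega> B"
  shows "0 \<le> trilinear_norm \<Omega> B"
    and "Lp_on 2 \<Omega> u \<Longrightarrow> Lp_on 4 \<Omega> v \<Longrightarrow> Lp_on 4 \<Omega> w \<Longrightarrow>
       \<bar>B u v w\<bar> \<le> trilinear_norm \<Omega> B * Lp_norm 2 \<Omega> u * Lp_norm 4 \<Omega> v * Lp_norm 4 \<Omega> w"
proof -
  obtain M where M: "\<forall>u v w. Lp_on 2 \<Omega> u \<and> Lp_on 4 \<Omega> v \<and> Lp_on 4 \<Omega> w \<longrightarrow>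
        \<bar>B u v w\<bar> \<le> M * Lp_norm 2 \<Omega> u * Lp_norm 4 \<Omega> v * Lp_norm 4 \<Omega> w"
    using BC unfolding cont_trilinear_on_def by blast
  define S :: "(('a \<Rightarrow> 'b) \<times> ('a \<Rightarrow> 'c) \<times> ('a \<Rightarrow> 'c)) set" where "S = {(u, v, w). Lp_on 2 \<Omega> u \<and> Lp_on 4 \<Omega> v \<and> Lp_on 4 \<Omega> w}"
  define f where "f = (\<lambda>(u, v, w). \<bar>B u v w\<bar> / (Lp_norm 2 \<Omega> u * Lp_norm 4 \<Omega> v * Lp_norm 4 \<Omega> w))"
  have T: "trilinear_norm \<Omega> B = Sup (f ` S)" unfolding trilinear_norm_def S_def f_def by simp
  have fb: "f t \<le> max M 0" if "t \<in> S" for t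
  proof -
    obtain u v w where t: "t = (u, v, w)" by (cases t)
    have h: "Lp_on 2 \<Omega> u" "Lp_on 4 \<Omega> v" "Lp_on 4 \<Omega> w" using that t S_def by auto
    define P where "P = Lp_norm 2 \<Omega> u * Lp_norm 4 \<Omega> v * Lp_norm 4 \<Omega> w"
    have P0: "0 \<le> P" unfolding P_def by (simp add: Lp_norm_nonneg)
    have BM: "\<bar>B u v w\<bar> \<le> M * P" using M h unfolding P_def by (simp add: mult.assoc)
    have "f t = \<bar>B u v w\<bar> / P" unfolding f_def t P_def by simp
    also have "\<dots> \<le> max M 0"
    proof (cases "P = 0")
      case False
      then have "P > 0" using P0 by simp
      then show ?thesis using BM by (simp add: divide_le_eq) (smt (verit) mult_right_mono)
    qed simp
    finally show ?thesis .
  qed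
  have bdd: "bdd_above (f ` S)" using fb by (intro bdd_aboveI[of _ "max M 0"]) auto
  have z: "Lp_on p \<Omega> (\<lambda>x. 0 :: 'd::real_normed_vector)" if "p > 0" for p
    unfolding Lp_on_def using that by simp
  have "((\<lambda>x. 0), (\<lambda>x. 0), (\<lambda>x. 0)) \<in> S" unfolding S_def using z[of 2] z[of 4] by simp
  then have "f ((\<lambda>x. 0), (\<lambda>x. 0), (\<lambda>x. 0)) \<le> Sup (f ` S)" using bdd by (intro cSup_upper) auto
  moreover have "0 \<le> f ((\<lambda>x. 0), (\<lambda>x. 0), (\<lambda>x. 0))" unfolding f_def by (simp add: Lp_norm_nonneg)
  ultimately show T0: "0 \<le> trilinear_norm \<Omega> B" using T by linarith
  assume h: "Lp_on 2 \<Omega> u" "Lp_on 4 \<Omega> v" "Lp_on 4 \<Omega> w"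
  define P where "P = Lp_norm 2 \<Omega> u * Lp_norm 4 \<Omega> v * Lp_norm 4 \<Omega> w"
  have P0: "0 \<le> P" unfolding P_def by (simp add: Lp_norm_nonneg)
  have BM: "\<bar>B u v w\<bar> \<le> M * P" using M h unfolding P_def by (simp add: mult.assoc)
  have "\<bar>B u v w\<bar> \<le> trilinear_norm \<Omega> B * P"
  proof (cases "P = 0")
    case True
    then show ?thesis using BM by simp
  next
    case False
    then have Pp: "P > 0" using P0 by simp
    have "(u, v, w) \<in> S" using h S_def by simp
    then have "f (u, v, w) \<le> trilinear_norm \<Omega> B" unfolding T using bdd by (intro cSup_upper) auto
    then show ?thesis using Pp unfolding f_def P_def by (simp add: divide_le_eq mult.assoc)
  qed
  then show "\<bar>B u v w\<bar> \<le> trilinear_norm \<Omega> B * Lp_norm 2 \<Omega> u * Lp_norm 4 \<Omega> v * Lp_norm 4 \<Omega> w"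
    unfolding P_def by (simp add: mult.assoc)
qed

lemma L_zero:
  fixes L :: "('k::finite \<Rightarrow> real^'n::finite \<Rightarrow> real) \<Rightarrow> real"
  assumes LC: "cont_linear_functional \<Omega> L" and z: "H20k \<Omega> (\<lambda>(i::'k) x. 0)"
  shows "L (\<lambda>i x. 0) = 0"
proof -
  have lin: "\<forall>u v a b. H20k \<Omega> u \<and> H20k \<Omega> v \<longrightarrow> L (\<lambda>i. lincomb a (u i) b (v i)) = a * L u + b * L v"
    using LC unfolding cont_linear_functional_def by blast
  have "L (\<lambda>i. lincomb 0 ((\<lambda>i x. 0) i) 0 ((\<lambda>i x. 0) i)) = 0 * L (\<lambda>i x. 0) + 0 * L (\<lambda>i x. 0)"
    using lin[rule_format, OF conjI[OF z z]] .
  then show ?thesis by (simp add: lincomb_def)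
qed

lemma dual_bound:
  fixes L :: "('k::finite \<Rightarrow> real^'n::finite \<Rightarrow> real) \<Rightarrow> real"
  assumes LC: "cont_linear_functional \<Omega> L" and u: "H20k \<Omega> u"
  shows "0 \<le> dual_norm \<Omega> L \<Longrightarrow> \<bar>L u\<bar> \<le> dual_norm \<Omega> L * H2k_norm \<Omega> u"
    and "u \<noteq> (\<lambda>i x. 0) \<Longrightarrow> 0 \<le> dual_norm \<Omega> L"
proof -
  obtain M where M: "\<forall>u. H20k \<Omega> u \<longrightarrow> \<bar>L u\<bar> \<le> M * H2k_norm \<Omega> u"
    using LC unfolding cont_linear_functional_def by blast
  define S :: "('k \<Rightarrow> real^'n \<Rightarrow> real) set" where "S = {u. H20k \<Omega> u \<and> u \<noteq> (\<lambda>i x. 0)}"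
  define f where "f u = \<bar>L u\<bar> / H2k_norm \<Omega> u" for u
  have D: "dual_norm \<Omega> L = Sup (f ` S)" unfolding dual_norm_def S_def f_def by simp
  have N0: "0 \<le> H2k_norm \<Omega> u" for u unfolding H2k_norm_def by (simp add: sum_nonneg)
  have fb: "f u \<le> max M 0" if "u \<in> S" for u
  proof (cases "H2k_norm \<Omega> u = 0")
    case False
    then have "H2k_norm \<Omega> u > 0" using N0[of u] by simp
    moreover have "\<bar>L u\<bar> \<le> M * H2k_norm \<Omega> u" using M that S_def by blast
    ultimately show ?thesis unfolding f_def by (simp add: divide_le_eq) (smt (verit) mult_right_mono)
  qed (simp add: f_def)
  have bdd: "bdd_above (f ` S)" using fb by (intro bdd_aboveI[of _ "max M 0"]) auto
  show "u \<noteq> (\<lambda>i x. 0) \<Longrightarrow> 0 \<le> dual_norm \<Omega> L"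
  proof -
    assume "u \<noteq> (\<lambda>i x. 0)"
    then have "u \<in> S" using u S_def by simp
    then have "f u \<le> Sup (f ` S)" using bdd by (intro cSup_upper) auto
    moreover have "0 \<le> f u" unfolding f_def using N0[of u] by simp
    ultimately show ?thesis using D by linarith
  qed
  assume D0: "0 \<le> dual_norm \<Omega> L"
  show "\<bar>L u\<bar> \<le> dual_norm \<Omega> L * H2k_norm \<Omega> u"
  proof (cases "u = (\<lambda>i x. 0)")
    case True
    then have "L u = 0" using L_zero[OF LC] u by simp
    then show ?thesis using N0[of u] D0 by simp
  next
    case nz: False
    show ?thesis
    proof (cases "H2k_norm \<Omega> u = 0")
      case True
      then show ?thesis using M u by (metis mult_zero_right)
    next
      case False
      then have pos: "H2k_norm \<Omega> u > 0" using N0[of u] by simp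
      have "u \<in> S" using u nz S_def by simp
      then have "f u \<le> dual_norm \<Omega> L" unfolding D using bdd by (intro cSup_upper) auto
      then show ?thesis using pos unfolding f_def by (simp add: divide_le_eq)
    qed
  qed
qed

lemma vec_measurable:
  fixes f :: "'k::finite \<Rightarrow> 'a \<Rightarrow> 'b::euclidean_space"
  assumes "\<And>i. f i \<in> borel_measurable M"
  shows "(\<lambda>x. \<chi> i. f i x) \<in> borel_measurable M"
proof (subst borel_measurable_euclidean_space, intro ballI)
  fix b :: "'b^'k" assume "b \<in> Basis"
  then obtain j u where b: "b = axis j u" "u \<in> Basis" unfolding Basis_vec_def by auto
  have "(\<lambda>x. (\<chi> i. f i x) \<bullet> b) = (\<lambda>x. f j x \<bullet> u)" unfolding b by (simp add: inner_axis)
  also have "\<dots> \<in> borel_measurable M" using assms by (intro borel_measurable_inner) auto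
  finally show "(\<lambda>x. (\<chi> i. f i x) \<bullet> b) \<in> borel_measurable M" .
qed

lemma norm_vec_sq: "(norm (v :: 'b::real_normed_vector^'k::finite))\<^sup>2 = (\<Sum>i\<in>UNIV. (norm (v $ i))\<^sup>2)"
  unfolding norm_vec_def L2_set_def by (simp add: sum_nonneg)

lemma compw_app: "compw F \<Psi> x = (\<chi> i. F (\<Psi> $ i) x)"
  unfolding compw_def by simp

lemma compw_L2:
  fixes Hd :: "'x \<Rightarrow> 'a::euclidean_space \<Rightarrow> 'b::euclidean_space" and \<Psi> :: "'x^'k::finite"
  assumes "\<forall>w. Lp_on 2 \<Omega> (Hd w)"
  shows "Lp_on 2 \<Omega> (compw Hd \<Psi>)"
    and "(\<integral>x. (norm (compw Hd \<Psi> x))\<^sup>2 \<partial>lebesgue_on \<Omega>) = (\<Sum>i\<in>UNIV. (Lp_norm 2 \<Omega> (Hd (\<Psi> $ i)))\<^sup>2)"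
    and "Lp_norm 2 \<Omega> (compw Hd \<Psi>) = sqrt (\<Sum>i\<in>UNIV. (Lp_norm 2 \<Omega> (Hd (\<Psi> $ i)))\<^sup>2)"
proof -
  have meas: "Hd w \<in> borel_measurable (lebesgue_on \<Omega>)" for w using assms Lp2_on_iff by blast
  have int: "integrable (lebesgue_on \<Omega>) (\<lambda>x. (norm (Hd w x))\<^sup>2)" for w using assms Lp2_on_iff by blast
  have pw: "(norm (compw Hd \<Psi> x))\<^sup>2 = (\<Sum>i\<in>UNIV. (norm (Hd (\<Psi> $ i) x))\<^sup>2)" for x
    unfolding compw_app norm_vec_sq by simp
  show L: "Lp_on 2 \<Omega> (compw Hd \<Psi>)"
    unfolding Lp2_on_iff pw
  proof
    show "compw Hd \<Psi> \<in> borel_measurable (lebesgue_on \<Omega>)"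
      unfolding compw_def using meas by (intro vec_measurable)
    show "integrable (lebesgue_on \<Omega>) (\<lambda>x. \<Sum>i\<in>UNIV. (norm (Hd (\<Psi> $ i) x))\<^sup>2)"
      using int by (intro Bochner_Integration.integrable_sum) auto
  qed
  have sq: "(Lp_norm 2 \<Omega> f)\<^sup>2 = (\<integral>x. (norm (f x))\<^sup>2 \<partial>lebesgue_on \<Omega>)" for f :: "'a \<Rightarrow> 'c::real_normed_vector"
    unfolding Lp2_norm by (simp add: integral_nonneg_AE)
  show I: "(\<integral>x. (norm (compw Hd \<Psi> x))\<^sup>2 \<partial>lebesgue_on \<Omega>) = (\<Sum>i\<in>UNIV. (Lp_norm 2 \<Omega> (Hd (\<Psi> $ i)))\<^sup>2)"
    unfolding pw sq using int by (simp add: integral_sum)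
  show "Lp_norm 2 \<Omega> (compw Hd \<Psi>) = sqrt (\<Sum>i\<in>UNIV. (Lp_norm 2 \<Omega> (Hd (\<Psi> $ i)))\<^sup>2)"
    unfolding Lp2_norm I ..
qed

lemma compw_L4:
  fixes Gd :: "'x \<Rightarrow> 'a::euclidean_space \<Rightarrow> 'b::euclidean_space" and \<Psi> :: "'x^'k::finite"
  assumes "\<forall>w. Lp_on 4 \<Omega> (Gd w)"
  shows "Lp_on 4 \<Omega> (compw Gd \<Psi>)"
proof -
  have meas: "Gd w \<in> borel_measurable (lebesgue_on \<Omega>)" for w using assms Lp4_on_iff by blast
  have int: "integrable (lebesgue_on \<Omega>) (\<lambda>x. (norm (Gd w x))^4)" for w using assms Lp4_on_iff by blast
  have m: "compw Gd \<Psi> \<in> borel_measurable (lebesgue_on \<Omega>)"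
    unfolding compw_def using meas by (intro vec_measurable)
  have pw: "(norm (compw Gd \<Psi> x))^4 = (\<Sum>i\<in>UNIV. (norm (Gd (\<Psi> $ i) x))\<^sup>2)\<^sup>2" for x
  proof -
    have "(norm (compw Gd \<Psi> x))^4 = ((norm (compw Gd \<Psi> x))\<^sup>2)\<^sup>2" by (simp flip: power_mult)
    then show ?thesis unfolding compw_app norm_vec_sq by simp
  qed
  show ?thesis unfolding Lp4_on_iff
  proof (rule conjI[OF m], rule Bochner_Integration.integrable_bound[where f="\<lambda>x. real CARD('k) * (\<Sum>i\<in>UNIV. (norm (Gd (\<Psi> $ i) x))^4)"])
    show "integrable (lebesgue_on \<Omega>) (\<lambda>x. real CARD('k) * (\<Sum>i\<in>UNIV. (norm (Gd (\<Psi> $ i) x))^4))"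
      using int by (intro integrable_mult_right Bochner_Integration.integrable_sum) auto
    show "(\<lambda>x. (norm (compw Gd \<Psi> x))^4) \<in> borel_measurable (lebesgue_on \<Omega>)" using m by measurable
    show "AE x in lebesgue_on \<Omega>. norm ((norm (compw Gd \<Psi> x))^4) \<le> norm (real CARD('k) * (\<Sum>i\<in>UNIV. (norm (Gd (\<Psi> $ i) x))^4))"
    proof (rule AE_I2)
      fix x
      have "(norm (compw Gd \<Psi> x))^4 \<le> real CARD('k) * (\<Sum>i\<in>UNIV. ((norm (Gd (\<Psi> $ i) x))\<^sup>2)\<^sup>2)"
        unfolding pw by (rule sum_sq_card)
      moreover have "((norm (Gd (\<Psi> $ i) x))\<^sup>2)\<^sup>2 = (norm (Gd (\<Psi> $ i) x))^4" for i by (simp flip: power_mult)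
      moreover have "0 \<le> real CARD('k) * (\<Sum>i\<in>UNIV. (norm (Gd (\<Psi> $ i) x))^4)" by (simp add: sum_nonneg)
      ultimately show "norm ((norm (compw Gd \<Psi> x))^4) \<le> norm (real CARD('k) * (\<Sum>i\<in>UNIV. (norm (Gd (\<Psi> $ i) x))^4))"
        by simp
    qed
  qed
qed

lemma amgm_t:
  fixes p q t :: real
  assumes "0 < t"
  shows "p * q \<le> (t * p\<^sup>2 + q\<^sup>2 / t) / 2"
proof -
  have "0 \<le> (t * p - q)\<^sup>2" by simp
  also have "(t * p - q)\<^sup>2 = t\<^sup>2 * p\<^sup>2 - 2 * t * (p * q) + q\<^sup>2" by (simp add: power2_eq_square algebra_simps)
  finally have "2 * t * (p * q) \<le> t\<^sup>2 * p\<^sup>2 + q\<^sup>2" by linarith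
  then have "p * q \<le> (t\<^sup>2 * p\<^sup>2 + q\<^sup>2) / (2 * t)" using assms by (simp add: field_simps)
  also have "\<dots> = (t * p\<^sup>2 + q\<^sup>2 / t) / 2" using assms by (simp add: field_simps power2_eq_square)
  finally show ?thesis .
qed

lemma inf_bound:
  fixes A B X :: real
  assumes A: "0 \<le> A" and B: "0 \<le> B" and h: "\<And>t. 0 < t \<Longrightarrow> X \<le> (t * A^4 + B^4 / t) / 2"
  shows "X \<le> A\<^sup>2 * B\<^sup>2"
proof (cases "A = 0 \<or> B = 0")
  case False
  then have Ap: "A > 0" and Bp: "B > 0" using A B by auto
  define t where "t = B\<^sup>2 / A\<^sup>2"
  have tp: "t > 0" using Ap Bp by (simp add: t_def)
  have "X \<le> (t * A^4 + B^4 / t) / 2" using h[OF tp] .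
  also have "\<dots> = A\<^sup>2 * B\<^sup>2" using Ap Bp unfolding t_def by (simp add: field_simps power2_eq_square power4_eq_xxxx)
  finally show ?thesis .
next
  case True
  show ?thesis
  proof (rule ccontr)
    assume "\<not> X \<le> A\<^sup>2 * B\<^sup>2"
    then have Xp: "X > 0" using True by auto
    show False
    proof (cases "A = 0")
      case A0: True
      show False
      proof (cases "B = 0")
        case True then show False using h[of 1] A0 Xp by simp
      next
        case False
        then have Bp: "B > 0" using B by simp
        have "X \<le> (B^4 / X * A^4 + B^4 / (B^4 / X)) / 2" using h[of "B^4 / X"] Bp Xp by simp
        then show False using A0 Bp Xp by simp
      qed
    next
      case False
      then have Ap: "A > 0" using A by simp
      have B0: "B = 0" using True False by simp
      have "X \<le> (X / A^4 * A^4 + B^4 / (X / A^4)) / 2" using h[of "X / A^4"] Ap Xp by simp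
      then show False using B0 Ap Xp by simp
    qed
  qed
qed

lemma int_prod_bound:
  fixes a b :: "'a \<Rightarrow> real"
  assumes ma: "a \<in> borel_measurable M" and mb: "b \<in> borel_measurable M"
    and ia: "integrable M (\<lambda>x. (a x)^4)" and ib: "integrable M (\<lambda>x. (b x)^4)"
    and Ia: "(\<integral>x. (a x)^4 \<partial>M) \<le> A^4" and Ib: "(\<integral>x. (b x)^4 \<partial>M) \<le> B^4"
    and A: "0 \<le> A" and B: "0 \<le> B"
  shows "integrable M (\<lambda>x. (a x)\<^sup>2 * (b x)\<^sup>2)" and "(\<integral>x. (a x)\<^sup>2 * (b x)\<^sup>2 \<partial>M) \<le> A\<^sup>2 * B\<^sup>2"
proof -
  have sq4: "((y::real)\<^sup>2)\<^sup>2 = y^4" for y by (simp flip: power_mult)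
  have pw: "(a x)\<^sup>2 * (b x)\<^sup>2 \<le> (t * (a x)^4 + (b x)^4 / t) / 2" if "t > 0" for t x
    using amgm_t[OF that, of "(a x)\<^sup>2" "(b x)\<^sup>2"] by (simp add: sq4)
  show int: "integrable M (\<lambda>x. (a x)\<^sup>2 * (b x)\<^sup>2)"
  proof (rule Bochner_Integration.integrable_bound[where f="\<lambda>x. ((a x)^4 + (b x)^4) / 2"])
    show "integrable M (\<lambda>x. ((a x)^4 + (b x)^4) / 2)" using ia ib by simp
    show "(\<lambda>x. (a x)\<^sup>2 * (b x)\<^sup>2) \<in> borel_measurable M" using ma mb by measurable
    show "AE x in M. norm ((a x)\<^sup>2 * (b x)\<^sup>2) \<le> norm (((a x)^4 + (b x)^4) / 2)"
    proof (rule AE_I2)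
      fix x
      have "(a x)\<^sup>2 * (b x)\<^sup>2 \<le> (1 * (a x)^4 + (b x)^4 / 1) / 2" by (rule pw) simp
      moreover have "0 \<le> (a x)\<^sup>2 * (b x)\<^sup>2" by simp
      ultimately show "norm ((a x)\<^sup>2 * (b x)\<^sup>2) \<le> norm (((a x)^4 + (b x)^4) / 2)" by simp
    qed
  qed
  show "(\<integral>x. (a x)\<^sup>2 * (b x)\<^sup>2 \<partial>M) \<le> A\<^sup>2 * B\<^sup>2"
  proof (rule inf_bound[OF A B])
    fix t :: real assume tp: "0 < t"
    have "(\<integral>x. (a x)\<^sup>2 * (b x)\<^sup>2 \<partial>M) \<le> (\<integral>x. (t * (a x)^4 + (b x)^4 / t) / 2 \<partial>M)"
      using int ia ib pw[OF tp] by (intro integral_mono) auto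
    also have "\<dots> = (t * (\<integral>x. (a x)^4 \<partial>M) + (\<integral>x. (b x)^4 \<partial>M) / t) / 2"
      using ia ib by simp
    also have "\<dots> \<le> (t * A^4 + B^4 / t) / 2"
      using Ia Ib tp by (intro divide_right_mono add_mono mult_left_mono) auto
    finally show "(\<integral>x. (a x)\<^sup>2 * (b x)\<^sup>2 \<partial>M) \<le> (t * A^4 + B^4 / t) / 2" .
  qed
qed

lemma powr4_inv: "0 \<le> (X::real) \<Longrightarrow> (X powr (1/4))^4 = X"
proof (cases "X = 0")
  case False
  assume "0 \<le> X"
  then have Xp: "X > 0" using False by simp
  have "(X powr (1/4))^4 = (X powr (1/4)) powr 4" using Xp by (simp add: powr_numeral)
  also have "\<dots> = X powr ((1/4) * 4)" by (simp add: powr_powr)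
  finally show ?thesis using Xp by simp
qed simp

lemma compw_L4_bound:
  fixes Gd :: "'x \<Rightarrow> 'a::euclidean_space \<Rightarrow> 'b::euclidean_space"
    and Hd :: "'x \<Rightarrow> 'a \<Rightarrow> 'c::euclidean_space" and \<Psi> :: "'x^'k::finite"
  assumes G4: "\<forall>w. Lp_on 4 \<Omega> (Gd w)" and H2: "\<forall>w. Lp_on 2 \<Omega> (Hd w)"
    and C: "0 \<le> C" and bd: "\<forall>w. Lp_norm 4 \<Omega> (Gd w) \<le> C * Lp_norm 2 \<Omega> (Hd w)"
  shows "Lp_norm 4 \<Omega> (compw Gd \<Psi>) \<le> C * Lp_norm 2 \<Omega> (compw Hd \<Psi>)"
proof -
  define M where "M = lebesgue_on \<Omega>"
  define g where "g i x = norm (Gd (\<Psi> $ i) x)" for i x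
  define d where "d i = Lp_norm 2 \<Omega> (Hd (\<Psi> $ i))" for i
  have d0: "0 \<le> d i" for i unfolding d_def by (rule Lp_norm_nonneg)
  have mG: "Gd w \<in> borel_measurable M" for w
    using G4 unfolding M_def Lp4_on_iff by blast
  have mg: "g i \<in> borel_measurable M" for i
    unfolding g_def using mG by measurable
  have ig: "integrable M (\<lambda>x. (g i x)^4)" for i
    using G4 unfolding g_def M_def Lp4_on_iff by blast
  have I4: "(\<integral>x. (g i x)^4 \<partial>M) \<le> (C * d i)^4" for i
  proof -
    define X where "X = (\<integral>x. (g i x)^4 \<partial>M)"
    have X0: "0 \<le> X" unfolding X_def by (simp add: integral_nonneg_AE)
    have "X powr (1/4) \<le> C * d i" using bd[rule_format, of "\<Psi> $ i"] unfolding X_def g_def M_def d_def Lp4_norm by simp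
    then have "(X powr (1/4))^4 \<le> (C * d i)^4" by (rule power_mono) simp
    then show ?thesis using powr4_inv[OF X0] unfolding X_def by simp
  qed
  have pair_int: "integrable M (\<lambda>x. (g i x)\<^sup>2 * (g j x)\<^sup>2)" for i j
    using int_prod_bound(1)[OF mg mg ig ig I4 I4] C d0 by simp
  have pair_le: "(\<integral>x. (g i x)\<^sup>2 * (g j x)\<^sup>2 \<partial>M) \<le> (C * d i)\<^sup>2 * (C * d j)\<^sup>2" for i j
    using int_prod_bound(2)[OF mg mg ig ig I4 I4] C d0 by simp
  have pw: "(norm (compw Gd \<Psi> x))^4 = (\<Sum>i\<in>UNIV. \<Sum>j\<in>UNIV. (g i x)\<^sup>2 * (g j x)\<^sup>2)" for x
  proof -
    have "(norm (compw Gd \<Psi> x))^4 = ((norm (compw Gd \<Psi> x))\<^sup>2)\<^sup>2" by (simp flip: power_mult)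
    also have "\<dots> = (\<Sum>i\<in>UNIV. (g i x)\<^sup>2) * (\<Sum>j\<in>UNIV. (g j x)\<^sup>2)"
      unfolding compw_app norm_vec_sq g_def by (simp add: power2_eq_square)
    also have "\<dots> = (\<Sum>i\<in>UNIV. \<Sum>j\<in>UNIV. (g i x)\<^sup>2 * (g j x)\<^sup>2)" by (rule sum_product)
    finally show ?thesis .
  qed
  define D where "D = sqrt (\<Sum>i\<in>UNIV. (d i)\<^sup>2)"
  have D0: "0 \<le> D" unfolding D_def by (simp add: sum_nonneg)
  have "(\<integral>x. (norm (compw Gd \<Psi> x))^4 \<partial>M) = (\<Sum>i\<in>UNIV. \<Sum>j\<in>UNIV. (\<integral>x. (g i x)\<^sup>2 * (g j x)\<^sup>2 \<partial>M))"
    unfolding pw using pair_int by (simp add: integral_sum Bochner_Integration.integrable_sum)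
  also have "\<dots> \<le> (\<Sum>i\<in>UNIV. \<Sum>j\<in>UNIV. (C * d i)\<^sup>2 * (C * d j)\<^sup>2)"
    by (intro sum_mono pair_le)
  also have "\<dots> = (\<Sum>i\<in>UNIV. (C * d i)\<^sup>2) * (\<Sum>j\<in>UNIV. (C * d j)\<^sup>2)" by (rule sum_product[symmetric])
  also have "\<dots> = (C * D)^4"
  proof -
    have "(\<Sum>i\<in>UNIV. (C * d i)\<^sup>2) = C\<^sup>2 * D\<^sup>2"
      unfolding D_def by (simp add: power_mult_distrib sum_distrib_left sum_nonneg)
    then show ?thesis by (simp add: power_mult_distrib power4_eq_xxxx power2_eq_square)
  qed
  finally have le: "(\<integral>x. (norm (compw Gd \<Psi> x))^4 \<partial>M) \<le> (C * D)^4" .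
  have "Lp_norm 4 \<Omega> (compw Gd \<Psi>) = (\<integral>x. (norm (compw Gd \<Psi> x))^4 \<partial>M) powr (1/4)"
    unfolding M_def by (rule Lp4_norm)
  also have "\<dots> \<le> ((C * D)^4) powr (1/4)"
    by (rule powr_mono2) (auto simp: le integral_nonneg_AE)
  also have "\<dots> = C * D" using C D0 by (simp add: pow4_powr)
  also have "D = Lp_norm 2 \<Omega> (compw Hd \<Psi>)" unfolding D_def d_def by (rule compw_L2(3)[OF H2, symmetric])
  finally show ?thesis .
qed

lemma linI2:
  fixes f :: "'a::real_vector \<Rightarrow> real"
  assumes "\<And>a b u v. f (a *\<^sub>R u + b *\<^sub>R v) = a * f u + b * f v"
  shows "linear f"
proof (rule linearI)
  fix x y show "f (x + y) = f x + f y" using assms[of 1 x 1 y] by simp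
next
  fix c x show "f (c *\<^sub>R x) = c *\<^sub>R f x" using assms[of c x 0 x] by simp
qed

lemma lin_repr_real:
  fixes f :: "'a::euclidean_space \<Rightarrow> real"
  assumes "linear f"
  shows "f x = (\<Sum>e\<in>Basis. (x \<bullet> e) * f e)"
  using lin_repr[of "\<lambda>w (_::unit). f w" "()" x] assms by simp

lemma compw_lin:
  fixes F :: "'x::real_vector \<Rightarrow> 'a \<Rightarrow> 'b::real_vector"
  assumes "\<forall>x. linear (\<lambda>w. F w x)"
  shows "compw F (a *\<^sub>R \<Psi> + b *\<^sub>R \<Phi>) = lincomb a (compw F \<Psi>) b (compw F \<Phi>)"
proof -
  have "F (a *\<^sub>R \<Psi> $ i + b *\<^sub>R \<Phi> $ i) x = a *\<^sub>R F (\<Psi> $ i) x + b *\<^sub>R F (\<Phi> $ i) x" for i x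
    using assms lin_pt(1) by metis
  then show ?thesis unfolding compw_def lincomb_def by (auto simp: vec_eq_iff)
qed

lemma acute:
  fixes P :: "'a::euclidean_space \<Rightarrow> 'a"
  assumes R: "R > 0" and cont: "continuous_on (cball 0 R) P"
    and pos: "\<And>x. norm x = R \<Longrightarrow> P x \<bullet> x > 0"
  shows "\<exists>x. P x = 0"
proof (rule ccontr)
  assume "\<not> (\<exists>x. P x = 0)"
  then have nz: "P x \<noteq> 0" for x by blast
  define f where "f x = - (R / norm (P x)) *\<^sub>R P x" for x
  have cf: "continuous_on (cball 0 R) f"
    unfolding f_def using cont nz by (intro continuous_intros) auto
  have nf: "norm (f x) = R" for x unfolding f_def using nz R by simp
  have "f \<in> cball 0 R \<rightarrow> cball 0 R" using nf by auto
  then obtain x where x: "x \<in> cball 0 R" "f x = x" using brouwer_ball[OF R cf] by blast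
  have "norm x = R" using x nf by metis
  then have "P x \<bullet> x > 0" by (rule pos)
  moreover have "P x \<bullet> x = - (R / norm (P x)) * (P x \<bullet> P x)" using x(2) unfolding f_def
    by (metis inner_scaleR_right)
  moreover have "0 < R / norm (P x) * (P x \<bullet> P x)" using nz R by simp
  ultimately show False by linarith
qed

lemma disc_scale:
  assumes "\<forall>x. linear (\<lambda>w. Hd w x)"
  shows "disc_norm \<Omega> Hd (c *\<^sub>R w) = \<bar>c\<bar> * disc_norm \<Omega> Hd w"
proof -
  have "Hd (c *\<^sub>R w) x = c *\<^sub>R Hd w x" for x using assms lin_pt(2) by metis
  then have "(\<integral>x. (norm (Hd (c *\<^sub>R w) x))\<^sup>2 \<partial>lebesgue_on \<Omega>) = c\<^sup>2 * (\<integral>x. (norm (Hd w x))\<^sup>2 \<partial>lebesgue_on \<Omega>)"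
    by (simp add: power_mult_distrib)
  then show ?thesis unfolding disc_norm_def Lp2_norm by (simp add: real_sqrt_mult)
qed

theorem theorem3p3:
  fixes \<Omega> :: "(real^'n::finite) set"
    and A :: "(real^'n \<Rightarrow> (real^'n^'n)^'k::finite) \<Rightarrow> (real^'n \<Rightarrow> (real^'n^'n)^'k) \<Rightarrow> real"
    and B :: "(real^'n \<Rightarrow> (real^'n^'n)^'k) \<Rightarrow> (real^'n \<Rightarrow> (real^'n)^'k) \<Rightarrow> (real^'n \<Rightarrow> (real^'n)^'k) \<Rightarrow> real"
    and L :: "('k \<Rightarrow> real^'n \<Rightarrow> real) \<Rightarrow> real"
    and Pd :: "'x::euclidean_space \<Rightarrow> real^'n \<Rightarrow> real"
    and Gd :: "'x \<Rightarrow> real^'n \<Rightarrow> real^'n"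
    and Hd :: "'x \<Rightarrow> real^'n \<Rightarrow> real^'n^'n"
    and Ed :: "'x \<Rightarrow> real^'n \<Rightarrow> real"
    and \<alpha> C2eq :: real
  assumes dom: "open \<Omega>" "connected \<Omega>" "bounded \<Omega>" "\<Omega> \<noteq> {}"
    and C2eq: "\<forall>\<phi>. H20 \<Omega> \<phi> \<longrightarrow> H2_norm \<Omega> \<phi> \<le> C2eq * H2_seminorm \<Omega> \<phi>"
    and A_cont: "cont_bilinear_on \<Omega> A"
    and alpha_pos: "\<alpha> > 0"
    and A_coercive: "\<forall>\<Xi>. Lp_on 2 \<Omega> \<Xi> \<longrightarrow> A \<Xi> \<Xi> \<ge> \<alpha> * (Lp_norm 2 \<Omega> \<Xi>)\<^sup>2"
    and B_cont: "cont_trilinear_on \<Omega> B"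
    and B_skew: "\<forall>\<Xi> \<Theta>. Lp_on 2 \<Omega> \<Xi> \<and> Lp_on 4 \<Omega> \<Theta> \<longrightarrow> B \<Xi> \<Theta> \<Theta> = 0"
    and L_cont: "cont_linear_functional \<Omega> L"
    and HD: "hessian_discretisation \<Omega> Pd Gd Hd"
    and ED: "companion \<Omega> Ed"
    and Gamma_fin: "Gamma_finite \<Omega> Hd Ed"
  shows "(\<exists>\<Psi>::'x^'k. hessian_scheme_sol A B L Gd Hd Ed \<Psi>) \<and>
         (dual_norm \<Omega> L * trilinear_norm \<Omega> B * (C_disc \<Omega> Pd Gd Hd)\<^sup>2 * Gamma_E \<Omega> Hd Ed * C2eq < \<alpha>\<^sup>2
          \<longrightarrow> (\<forall>\<Psi>1 \<Psi>2::'x^'k. hessian_scheme_sol A B L Gd Hd Ed \<Psi>1 \<and>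
                 hessian_scheme_sol A B L Gd Hd Ed \<Psi>2 \<longrightarrow> \<Psi>1 = \<Psi>2))"

proof -
  have PdL2: "\<forall>w. Lp_on 2 \<Omega> (Pd w)" and GdL4: "\<forall>w. Lp_on 4 \<Omega> (Gd w)"
    and HdL2: "\<forall>w. Lp_on 2 \<Omega> (Hd w)" and Gdlin: "\<forall>x. linear (\<lambda>w. Gd w x)"
    and Hdlin: "\<forall>x. linear (\<lambda>w. Hd w x)" and Hdnz: "\<forall>w. disc_norm \<Omega> Hd w = 0 \<longrightarrow> w = 0"
    using HD unfolding hessian_discretisation_def by auto
  have Edlin: "\<forall>x. linear (\<lambda>w. Ed w x)" and EdH: "\<forall>w. H20 \<Omega> (Ed w)"
    using ED unfolding companion_def by auto
  have Alin1: "A (lincomb a u b v) w = a * A u w + b * A v w"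
    if "Lp_on 2 \<Omega> u" "Lp_on 2 \<Omega> v" "Lp_on 2 \<Omega> w" for u v w a b
    using A_cont that unfolding cont_bilinear_on_def by blast
  have Alin2: "A w (lincomb a u b v) = a * A w u + b * A w v"
    if "Lp_on 2 \<Omega> u" "Lp_on 2 \<Omega> v" "Lp_on 2 \<Omega> w" for u v w a b
    using A_cont that unfolding cont_bilinear_on_def by blast
  have Bl: "\<forall>u u' v v' w w' a b. Lp_on 2 \<Omega> u \<and> Lp_on 2 \<Omega> u' \<and> Lp_on 4 \<Omega> v \<and> Lp_on 4 \<Omega> v'
          \<and> Lp_on 4 \<Omega> w \<and> Lp_on 4 \<Omega> w' \<longrightarrow>
        B (lincomb a u b u') v w = a * B u v w + b * B u' v w \<and>
        B u (lincomb a v b v') w = a * B u v w + b * B u v' w \<and>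
        B u v (lincomb a w b w') = a * B u v w + b * B u v w'"
    using B_cont unfolding cont_trilinear_on_def by blast
  have Blin1: "B (lincomb a u b u') v w = a * B u v w + b * B u' v w"
    if "Lp_on 2 \<Omega> u" "Lp_on 2 \<Omega> u'" "Lp_on 4 \<Omega> v" "Lp_on 4 \<Omega> w" for u u' v w a b
    using Bl that by blast
  have Blin2: "B u (lincomb a v b v') w = a * B u v w + b * B u v' w"
    if "Lp_on 2 \<Omega> u" "Lp_on 4 \<Omega> v" "Lp_on 4 \<Omega> v'" "Lp_on 4 \<Omega> w" for u v v' w a b
    using Bl that by blast
  have Blin3: "B u v (lincomb a w b w') = a * B u v w + b * B u v w'"
    if "Lp_on 2 \<Omega> u" "Lp_on 4 \<Omega> v" "Lp_on 4 \<Omega> w" "Lp_on 4 \<Omega> w'" for u v w w' a b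
    using Bl that by blast
  have Lin: "\<forall>u v a b. H20k \<Omega> u \<and> H20k \<Omega> v \<longrightarrow> L (\<lambda>i. lincomb a (u i) b (v i)) = a * L u + b * L v"
    using L_cont unfolding cont_linear_functional_def by blast
  define Hv where "Hv \<Psi> = compw Hd \<Psi>" for \<Psi> :: "'x^'k"
  define Gv where "Gv \<Psi> = compw Gd \<Psi>" for \<Psi> :: "'x^'k"
  define Ev where "Ev \<Psi> = (\<lambda>i. Ed (\<Psi> $ i))" for \<Psi> :: "'x^'k"
  define ND where "ND \<Psi> = Lp_norm 2 \<Omega> (Hv \<Psi>)" for \<Psi> :: "'x^'k"
  have HvL: "Lp_on 2 \<Omega> (Hv \<Psi>)" for \<Psi> unfolding Hv_def by (rule compw_L2(1)[OF HdL2])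
  have GvL: "Lp_on 4 \<Omega> (Gv \<Psi>)" for \<Psi> unfolding Gv_def by (rule compw_L4[OF GdL4])
  have Hvlin: "Hv (a *\<^sub>R \<Psi> + b *\<^sub>R \<Phi>) = lincomb a (Hv \<Psi>) b (Hv \<Phi>)" for a b \<Psi> \<Phi>
    unfolding Hv_def by (rule compw_lin[OF Hdlin])
  have Gvlin: "Gv (a *\<^sub>R \<Psi> + b *\<^sub>R \<Phi>) = lincomb a (Gv \<Psi>) b (Gv \<Phi>)" for a b \<Psi> \<Phi>
    unfolding Gv_def by (rule compw_lin[OF Gdlin])
  have EvH: "H20k \<Omega> (Ev \<Psi>)" for \<Psi> unfolding H20k_def Ev_def using EdH by blast
  have Evlin: "Ev (a *\<^sub>R \<Psi> + b *\<^sub>R \<Phi>) = (\<lambda>i. lincomb a (Ev \<Psi> i) b (Ev \<Phi> i))" for a b \<Psi> \<Phi>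
  proof -
    have "Ed (a *\<^sub>R \<Psi> $ i + b *\<^sub>R \<Phi> $ i) x = a *\<^sub>R Ed (\<Psi> $ i) x + b *\<^sub>R Ed (\<Phi> $ i) x" for i x
      using Edlin lin_pt(1) by metis
    then show ?thesis unfolding Ev_def lincomb_def by (auto intro!: ext)
  qed
  have LEvlin: "L (Ev (a *\<^sub>R \<Psi> + b *\<^sub>R \<Phi>)) = a * L (Ev \<Psi>) + b * L (Ev \<Phi>)" for a b \<Psi> \<Phi>
    unfolding Evlin using Lin EvH by blast
  have ND_eq: "ND \<Psi> = sqrt (\<Sum>i\<in>UNIV. (disc_norm \<Omega> Hd (\<Psi> $ i))\<^sup>2)" for \<Psi>
    unfolding ND_def Hv_def disc_norm_def by (rule compw_L2(3)[OF HdL2])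
  have ND0: "0 \<le> ND \<Psi>" for \<Psi> unfolding ND_def by (rule Lp_norm_nonneg)
  have sol_iff: "hessian_scheme_sol A B L Gd Hd Ed \<Psi> \<longleftrightarrow>
      (\<forall>\<Phi>. A (Hv \<Psi>) (Hv \<Phi>) + B (Hv \<Psi>) (Gv \<Psi>) (Gv \<Phi>) = L (Ev \<Phi>))" for \<Psi>
    unfolding hessian_scheme_sol_def Hv_def Gv_def Ev_def ..
  have Bskew: "B (Hv \<Psi>) (Gv \<Phi>) (Gv \<Phi>) = 0" for \<Psi> \<Phi> using B_skew HvL GvL by blast
  have coer: "\<alpha> * (ND \<Psi>)\<^sup>2 \<le> A (Hv \<Psi>) (Hv \<Psi>)" for \<Psi> unfolding ND_def using A_coercive HvL by blast
  have part1: "\<exists>\<Psi>::'x^'k. hessian_scheme_sol A B L Gd Hd Ed \<Psi>"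
  proof -
    define ell where "ell \<Psi> \<Phi> = A (Hv \<Psi>) (Hv \<Phi>) + B (Hv \<Psi>) (Gv \<Psi>) (Gv \<Phi>) - L (Ev \<Phi>)"
      for \<Psi> \<Phi> :: "'x^'k"
    have elllin: "linear (ell \<Psi>)" for \<Psi>
    proof (rule linI2)
      fix a b u v
      show "ell \<Psi> (a *\<^sub>R u + b *\<^sub>R v) = a * ell \<Psi> u + b * ell \<Psi> v"
        unfolding ell_def Hvlin Gvlin LEvlin
        using Alin2[OF HvL HvL HvL] Blin3[OF HvL GvL GvL GvL]
        by (simp add: algebra_simps)
    qed
    define P where "P \<Psi> = (\<Sum>e\<in>Basis. ell \<Psi> e *\<^sub>R e)" for \<Psi>
    have Pinner: "P \<Psi> \<bullet> \<Phi> = ell \<Psi> \<Phi>" for \<Psi> \<Phi>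
    proof -
      have "P \<Psi> \<bullet> \<Phi> = (\<Sum>e\<in>Basis. (\<Phi> \<bullet> e) * ell \<Psi> e)"
        unfolding P_def inner_sum_left inner_scaleR_left by (simp add: inner_commute mult.commute)
      also have "\<dots> = ell \<Psi> \<Phi>" by (rule lin_repr_real[OF elllin, symmetric])
      finally show ?thesis .
    qed
    have contell: "continuous_on UNIV (\<lambda>\<Psi>. ell \<Psi> e)" for e
    proof -
      have l1: "linear (\<lambda>\<Psi>. A (Hv \<Psi>) (Hv e))"
        by (rule linI2) (simp add: Hvlin Alin1[OF HvL HvL HvL])
      have c1: "continuous_on UNIV (\<lambda>\<Psi>. A (Hv \<Psi>) (Hv e))"
        by (rule linear_continuous_on) (use l1 linear_conv_bounded_linear in blast)
      have bl: "bilinear (\<lambda>\<Psi> \<Phi>. B (Hv \<Psi>) (Gv \<Phi>) (Gv e))"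
        unfolding bilinear_def
      proof (intro conjI allI)
        fix \<Psi> show "linear (\<lambda>\<Phi>. B (Hv \<Psi>) (Gv \<Phi>) (Gv e))"
          by (rule linI2) (simp add: Gvlin Blin2[OF HvL GvL GvL GvL])
      next
        fix \<Phi> show "linear (\<lambda>\<Psi>. B (Hv \<Psi>) (Gv \<Phi>) (Gv e))"
          by (rule linI2) (simp add: Hvlin Blin1[OF HvL HvL GvL GvL])
      qed
      have c2: "continuous_on UNIV (\<lambda>\<Psi>. B (Hv \<Psi>) (Gv \<Psi>) (Gv e))"
        using bilinear_continuous_on_compose[OF continuous_on_id continuous_on_id bl] by simp
      show ?thesis unfolding ell_def
        by (intro continuous_on_diff continuous_on_add c1 c2 continuous_on_const)
    qed
    have contP: "continuous_on UNIV P"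
      unfolding P_def by (intro continuous_on_sum continuous_on_scaleR contell continuous_on_const)
    obtain c where c: "c > 0" "\<forall>w. c * norm w \<le> disc_norm \<Omega> Hd w" using disc_lower[OF HD] by blast
    have NDlow: "c * norm \<Psi> \<le> ND \<Psi>" for \<Psi>
    proof -
      have "(c * norm \<Psi>)\<^sup>2 = (\<Sum>i\<in>UNIV. (c * norm (\<Psi> $ i))\<^sup>2)"
        by (simp add: power_mult_distrib norm_vec_sq sum_distrib_left)
      also have "\<dots> \<le> (\<Sum>i\<in>UNIV. (disc_norm \<Omega> Hd (\<Psi> $ i))\<^sup>2)"
        using c by (intro sum_mono power_mono) auto
      finally have "sqrt ((c * norm \<Psi>)\<^sup>2) \<le> ND \<Psi>" unfolding ND_eq by (rule real_sqrt_le_mono)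
      then show ?thesis using c by simp
    qed
    have linL: "linear (\<lambda>\<Psi>. L (Ev \<Psi>))" by (rule linI2) (rule LEvlin)
    obtain K where K: "K > 0" "\<And>\<Psi>. norm (L (Ev \<Psi>)) \<le> K * norm \<Psi>"
      using linear_bounded_pos[OF linL] by blast
    have Plow: "\<alpha> * c\<^sup>2 * (norm \<Psi>)\<^sup>2 - K * norm \<Psi> \<le> P \<Psi> \<bullet> \<Psi>" for \<Psi>
    proof -
      have "P \<Psi> \<bullet> \<Psi> = A (Hv \<Psi>) (Hv \<Psi>) - L (Ev \<Psi>)" unfolding Pinner ell_def Bskew by simp
      moreover have "\<alpha> * (ND \<Psi>)\<^sup>2 \<le> A (Hv \<Psi>) (Hv \<Psi>)" by (rule coer)
      moreover have "\<alpha> * c\<^sup>2 * (norm \<Psi>)\<^sup>2 \<le> \<alpha> * (ND \<Psi>)\<^sup>2"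
      proof -
        have "(c * norm \<Psi>)\<^sup>2 \<le> (ND \<Psi>)\<^sup>2" using NDlow[of \<Psi>] c by (intro power_mono) auto
        then show ?thesis using alpha_pos by (simp add: power_mult_distrib mult.assoc)
      qed
      moreover have "L (Ev \<Psi>) \<le> K * norm \<Psi>" using K(2)[of \<Psi>] by simp
      ultimately show ?thesis by linarith
    qed
    define R where "R = K / (\<alpha> * c\<^sup>2) + 1"
    have ac: "\<alpha> * c\<^sup>2 > 0" using alpha_pos c by simp
    have Rp: "R > 0" unfolding R_def using K(1) ac by (smt (verit) divide_pos_pos)
    have pos: "P \<Psi> \<bullet> \<Psi> > 0" if "norm \<Psi> = R" for \<Psi>
    proof -
      have "\<alpha> * c\<^sup>2 * R\<^sup>2 - K * R = R * (\<alpha> * c\<^sup>2)"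
        unfolding R_def using ac alpha_pos c(1) by (simp add: field_simps power2_eq_square)
      then have "\<alpha> * c\<^sup>2 * R\<^sup>2 - K * R > 0" using Rp ac by simp
      then show ?thesis using Plow[of \<Psi>] that by simp
    qed
    obtain \<Psi> where P0: "P \<Psi> = 0"
      using acute[OF Rp continuous_on_subset[OF contP] pos] by blast
    have "ell \<Psi> \<Phi> = 0" for \<Phi> using Pinner[of \<Psi> \<Phi>] P0 by simp
    then have "hessian_scheme_sol A B L Gd Hd Ed \<Psi>" unfolding sol_iff ell_def by simp
    then show ?thesis by blast
  qed
  have apriori: "\<alpha> * (ND \<Psi>)\<^sup>2 \<le> L (Ev \<Psi>)" if "hessian_scheme_sol A B L Gd Hd Ed \<Psi>" for \<Psi>
  proof -
    have "A (Hv \<Psi>) (Hv \<Psi>) + B (Hv \<Psi>) (Gv \<Psi>) (Gv \<Psi>) = L (Ev \<Psi>)" using that sol_iff by blast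
    then show ?thesis using coer[of \<Psi>] Bskew[of \<Psi> \<Psi>] by simp
  qed
  have Lbound: "\<bar>L (Ev \<Psi>)\<bar> \<le> dual_norm \<Omega> L * C2eq * Gamma_E \<Omega> Hd Ed * ND \<Psi>"
    if Lnz: "L (Ev \<Psi>) \<noteq> 0" for \<Psi>
  proof -
    have EvNZ: "Ev \<Psi> \<noteq> (\<lambda>i x. 0)" using Lnz L_zero[OF L_cont] EvH by metis
    have D0: "0 \<le> dual_norm \<Omega> L" by (rule dual_bound(2)[OF L_cont EvH EvNZ])
    have Lub: "\<bar>L u\<bar> \<le> dual_norm \<Omega> L * H2k_norm \<Omega> u" if "H20k \<Omega> u" for u
      by (rule dual_bound(1)[OF L_cont that D0])
    have G0: "0 \<le> Gamma_E \<Omega> Hd Ed" by (rule Gamma_bound(1)[OF HD Gamma_fin])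
    have H2n0: "0 \<le> H2_norm \<Omega> \<phi>" for \<phi> unfolding H2_norm_def by simp
    have C0: "0 \<le> C2eq"
    proof (rule ccontr)
      assume "\<not> 0 \<le> C2eq"
      then have Cn: "C2eq \<le> 0" by simp
      have z: "H2_norm \<Omega> (Ev \<Psi> i) = 0" for i
      proof -
        have "H2_norm \<Omega> (Ev \<Psi> i) \<le> C2eq * H2_seminorm \<Omega> (Ev \<Psi> i)"
          using C2eq EdH unfolding Ev_def by blast
        moreover have "C2eq * H2_seminorm \<Omega> (Ev \<Psi> i) \<le> 0"
          unfolding H2_seminorm_def by (rule mult_nonpos_nonneg[OF Cn Lp_norm_nonneg])
        ultimately show ?thesis using H2n0[of "Ev \<Psi> i"] by linarith
      qed
      have "H2k_norm \<Omega> (Ev \<Psi>) = 0" unfolding H2k_norm_def z by simp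
      then show False using Lub[OF EvH[of \<Psi>]] Lnz by simp
    qed
    have H2bd: "H2_norm \<Omega> (Ed w) \<le> C2eq * Gamma_E \<Omega> Hd Ed * disc_norm \<Omega> Hd w" if "w \<noteq> 0" for w
    proof -
      have "H2_norm \<Omega> (Ed w) \<le> C2eq * Lp_norm 2 \<Omega> (whess \<Omega> (Ed w))"
        using C2eq EdH unfolding H2_seminorm_def by blast
      also have "\<dots> \<le> C2eq * (Gamma_E \<Omega> Hd Ed * disc_norm \<Omega> Hd w)"
        by (rule mult_left_mono[OF Gamma_bound(2)[OF HD Gamma_fin that] C0])
      finally show ?thesis by (simp add: mult.assoc)
    qed
    define K0 where "K0 = C2eq * Gamma_E \<Omega> Hd Ed"
    have K00: "0 \<le> K0" unfolding K0_def using C0 G0 by simp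
    have H2kbd: "H2k_norm \<Omega> (Ev \<psi>) \<le> K0 * ND \<psi>" if nz: "\<forall>i. \<psi> $ i \<noteq> 0" for \<psi>
    proof -
      have "(\<Sum>i\<in>UNIV. (H2_norm \<Omega> (Ev \<psi> i))\<^sup>2) \<le> (\<Sum>i\<in>UNIV. (K0 * disc_norm \<Omega> Hd (\<psi> $ i))\<^sup>2)"
        using H2bd nz H2n0 unfolding Ev_def K0_def by (intro sum_mono power_mono) auto
      also have "\<dots> = K0\<^sup>2 * (\<Sum>i\<in>UNIV. (disc_norm \<Omega> Hd (\<psi> $ i))\<^sup>2)"
        by (simp add: power_mult_distrib sum_distrib_left)
      finally have "H2k_norm \<Omega> (Ev \<psi>) \<le> sqrt (K0\<^sup>2 * (\<Sum>i\<in>UNIV. (disc_norm \<Omega> Hd (\<psi> $ i))\<^sup>2))"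
        unfolding H2k_norm_def by (rule real_sqrt_le_mono)
      also have "\<dots> = K0 * ND \<psi>" unfolding ND_eq using K00 by (simp add: real_sqrt_mult)
      finally show ?thesis .
    qed
    obtain e0 :: 'x where e0: "e0 \<in> Basis" using nonempty_Basis by blast
    then have e0nz: "e0 \<noteq> 0" by auto
    define v :: "'x^'k" where "v = (\<chi> i. if \<Psi> $ i = 0 then e0 else 0)"
    define z where "z i = (if \<Psi> $ i = 0 then disc_norm \<Omega> Hd e0 else 0)" for i :: 'k
    define d where "d i = disc_norm \<Omega> Hd (\<Psi> $ i)" for i :: 'k
    define \<psi> where "\<psi> \<epsilon> = (1 + \<epsilon>) *\<^sub>R \<Psi> + \<epsilon> *\<^sub>R v" for \<epsilon> :: real
    have disc0: "disc_norm \<Omega> Hd 0 = 0" using disc_scale[OF Hdlin, of \<Omega> 0 0] by simp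
    have comp: "\<psi> \<epsilon> $ i \<noteq> 0" and discpsi: "disc_norm \<Omega> Hd (\<psi> \<epsilon> $ i) = (1 + \<epsilon>) * d i + \<epsilon> * z i"
      if ep: "\<epsilon> > 0" for \<epsilon> i
    proof -
      have "\<psi> \<epsilon> $ i \<noteq> 0 \<and> disc_norm \<Omega> Hd (\<psi> \<epsilon> $ i) = (1 + \<epsilon>) * d i + \<epsilon> * z i"
      proof (cases "\<Psi> $ i = 0")
        case True
        then have "\<psi> \<epsilon> $ i = \<epsilon> *\<^sub>R e0" unfolding \<psi>_def v_def by simp
        then show ?thesis using True ep e0nz disc_scale[OF Hdlin, of \<Omega> \<epsilon> e0] disc0
          unfolding d_def z_def by simp
      next
        case False
        then have "\<psi> \<epsilon> $ i = (1 + \<epsilon>) *\<^sub>R \<Psi> $ i" unfolding \<psi>_def v_def by simp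
        then show ?thesis using False ep disc_scale[OF Hdlin, of \<Omega> "1 + \<epsilon>" "\<Psi> $ i"]
          unfolding d_def z_def by simp
      qed
      then show "\<psi> \<epsilon> $ i \<noteq> 0" "disc_norm \<Omega> Hd (\<psi> \<epsilon> $ i) = (1 + \<epsilon>) * d i + \<epsilon> * z i" by auto
    qed
    define Z where "Z = L2_set z UNIV"
    have ND_L2: "ND \<phi> = L2_set (\<lambda>i. disc_norm \<Omega> Hd (\<phi> $ i)) UNIV" for \<phi> unfolding ND_eq L2_set_def ..
    have NDpsi: "ND (\<psi> \<epsilon>) \<le> (1 + \<epsilon>) * ND \<Psi> + \<epsilon> * Z" if ep: "\<epsilon> > 0" for \<epsilon>
    proof -
      have "ND (\<psi> \<epsilon>) = L2_set (\<lambda>i. (1 + \<epsilon>) * d i + \<epsilon> * z i) UNIV"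
        unfolding ND_L2 using discpsi[OF ep] by simp
      also have "\<dots> \<le> L2_set (\<lambda>i. (1 + \<epsilon>) * d i) UNIV + L2_set (\<lambda>i. \<epsilon> * z i) UNIV"
        by (rule L2_set_triangle_ineq)
      also have "\<dots> = (1 + \<epsilon>) * ND \<Psi> + \<epsilon> * Z"
        unfolding ND_L2 Z_def d_def using ep by (simp add: L2_set_right_distrib)
      finally show ?thesis .
    qed
    define a where "a = \<bar>L (Ev \<Psi>)\<bar>"
    define W where "W = dual_norm \<Omega> L * K0 * ND \<Psi> + dual_norm \<Omega> L * K0 * Z + \<bar>L (Ev v)\<bar>"
    have main: "a \<le> dual_norm \<Omega> L * K0 * ND \<Psi> + \<epsilon> * W" if ep: "\<epsilon> > 0" for \<epsilon>
    proof -
      have Lpsi: "L (Ev (\<psi> \<epsilon>)) = (1 + \<epsilon>) * L (Ev \<Psi>) + \<epsilon> * L (Ev v)"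
        unfolding \<psi>_def by (rule LEvlin)
      have a0: "0 \<le> a" unfolding a_def by simp
      have "a \<le> (1 + \<epsilon>) * a" using mult_right_mono[of 1 "1 + \<epsilon>" a] a0 ep by simp
      also have "\<dots> = \<bar>L (Ev (\<psi> \<epsilon>)) - \<epsilon> * L (Ev v)\<bar>" unfolding Lpsi a_def using ep by (simp add: abs_mult)
      also have "\<dots> \<le> \<bar>L (Ev (\<psi> \<epsilon>))\<bar> + \<epsilon> * \<bar>L (Ev v)\<bar>" using ep abs_triangle_ineq4[of "L (Ev (\<psi> \<epsilon>))" "\<epsilon> * L (Ev v)"] by (simp add: abs_mult)
      also have "\<bar>L (Ev (\<psi> \<epsilon>))\<bar> \<le> dual_norm \<Omega> L * (K0 * ND (\<psi> \<epsilon>))"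
        using Lub[OF EvH] H2kbd[of "\<psi> \<epsilon>"] comp[OF ep] D0 by (meson mult_left_mono order_trans)
      also have "K0 * ND (\<psi> \<epsilon>) \<le> K0 * ((1 + \<epsilon>) * ND \<Psi> + \<epsilon> * Z)"
        using NDpsi[OF ep] K00 by (rule mult_left_mono)
      finally have "a \<le> dual_norm \<Omega> L * (K0 * ((1 + \<epsilon>) * ND \<Psi> + \<epsilon> * Z)) + \<epsilon> * \<bar>L (Ev v)\<bar>"
        using D0 by (simp add: mult_left_mono)
      then show ?thesis unfolding W_def by (simp add: algebra_simps)
    qed
    have W0: "0 \<le> W" unfolding W_def using D0 K00 ND0[of \<Psi>] by (simp add: Z_def)
    have "a \<le> dual_norm \<Omega> L * K0 * ND \<Psi>"
    proof (rule field_le_epsilon)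
      fix e :: real assume e: "0 < e"
      show "a \<le> dual_norm \<Omega> L * K0 * ND \<Psi> + e"
      proof (cases "W = 0")
        case True then show ?thesis using main[of 1] e by simp
      next
        case False
        then have Wp: "W > 0" using W0 by simp
        have "a \<le> dual_norm \<Omega> L * K0 * ND \<Psi> + (e / W) * W" using main[of "e / W"] e Wp by simp
        then show ?thesis using Wp by simp
      qed
    qed
    then show ?thesis unfolding a_def K0_def by (simp add: mult.assoc)
  qed
  have part2: "dual_norm \<Omega> L * trilinear_norm \<Omega> B * (C_disc \<Omega> Pd Gd Hd)\<^sup>2 * Gamma_E \<Omega> Hd Ed * C2eq < \<alpha>\<^sup>2
          \<longrightarrow> (\<forall>\<Psi>1 \<Psi>2::'x^'k. hessian_scheme_sol A B L Gd Hd Ed \<Psi>1 \<and>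
                 hessian_scheme_sol A B L Gd Hd Ed \<Psi>2 \<longrightarrow> \<Psi>1 = \<Psi>2)"
  proof (intro impI allI, elim conjE)
    fix \<Psi>1 \<Psi>2 :: "'x^'k"
    assume cond: "dual_norm \<Omega> L * trilinear_norm \<Omega> B * (C_disc \<Omega> Pd Gd Hd)\<^sup>2 * Gamma_E \<Omega> Hd Ed * C2eq < \<alpha>\<^sup>2"
      and s1: "hessian_scheme_sol A B L Gd Hd Ed \<Psi>1" and s2: "hessian_scheme_sol A B L Gd Hd Ed \<Psi>2"
    define T where "T = trilinear_norm \<Omega> B"
    define Cd where "Cd = C_disc \<Omega> Pd Gd Hd"
    define \<delta> where "\<delta> = \<Psi>1 - \<Psi>2"
    have T0: "0 \<le> T" unfolding T_def by (rule tri_bound(1)[OF B_cont])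
    have Cd0: "0 \<le> Cd" unfolding Cd_def by (rule C_disc_bound(1)[OF HD])
    have G4: "Lp_norm 4 \<Omega> (Gv \<Phi>) \<le> Cd * ND \<Phi>" for \<Phi>
      unfolding Gv_def ND_def Hv_def Cd_def
      by (rule compw_L4_bound[OF GdL4 HdL2 C_disc_bound(1)[OF HD]])
         (use C_disc_bound(2)[OF HD] in \<open>simp add: disc_norm_def\<close>)
    have P1: "\<Psi>1 = 1 *\<^sub>R \<delta> + 1 *\<^sub>R \<Psi>2" unfolding \<delta>_def by simp
    have H1: "Hv \<Psi>1 = lincomb 1 (Hv \<delta>) 1 (Hv \<Psi>2)" unfolding P1 by (rule Hvlin)
    have G1: "Gv \<Psi>1 = lincomb 1 (Gv \<delta>) 1 (Gv \<Psi>2)" unfolding P1 by (rule Gvlin)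
    have e1: "A (Hv \<Psi>1) (Hv \<delta>) + B (Hv \<Psi>1) (Gv \<Psi>1) (Gv \<delta>) = L (Ev \<delta>)" using s1 sol_iff by blast
    have e2: "A (Hv \<Psi>2) (Hv \<delta>) + B (Hv \<Psi>2) (Gv \<Psi>2) (Gv \<delta>) = L (Ev \<delta>)" using s2 sol_iff by blast
    have a1: "A (Hv \<Psi>1) (Hv \<delta>) = A (Hv \<delta>) (Hv \<delta>) + A (Hv \<Psi>2) (Hv \<delta>)"
      unfolding H1 using Alin1[OF HvL HvL HvL] by simp
    have b1: "B (Hv \<Psi>1) (Gv \<Psi>1) (Gv \<delta>) = B (Hv \<delta>) (Gv \<Psi>1) (Gv \<delta>) + B (Hv \<Psi>2) (Gv \<Psi>1) (Gv \<delta>)"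
      unfolding H1 using Blin1[OF HvL HvL GvL GvL] by simp
    have b2: "B (Hv \<delta>) (Gv \<Psi>1) (Gv \<delta>) = B (Hv \<delta>) (Gv \<Psi>2) (Gv \<delta>)"
      unfolding G1 using Blin2[OF HvL GvL GvL GvL] Bskew by simp
    have b3: "B (Hv \<Psi>2) (Gv \<Psi>1) (Gv \<delta>) = B (Hv \<Psi>2) (Gv \<Psi>2) (Gv \<delta>)"
      unfolding G1 using Blin2[OF HvL GvL GvL GvL] Bskew by simp
    have eq: "A (Hv \<delta>) (Hv \<delta>) = - B (Hv \<delta>) (Gv \<Psi>2) (Gv \<delta>)"
      using e1 e2 a1 b1 b2 b3 by linarith
    define x where "x = ND \<delta>"
    define d where "d = ND \<Psi>2"
    have x0: "0 \<le> x" and d0: "0 \<le> d" unfolding x_def d_def by (rule ND0)+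
    have Bb: "\<bar>B (Hv \<delta>) (Gv \<Psi>2) (Gv \<delta>)\<bar> \<le> T * x * (Cd * d) * (Cd * x)"
    proof -
      have "\<bar>B (Hv \<delta>) (Gv \<Psi>2) (Gv \<delta>)\<bar> \<le> T * x * Lp_norm 4 \<Omega> (Gv \<Psi>2) * Lp_norm 4 \<Omega> (Gv \<delta>)"
        unfolding T_def x_def ND_def by (rule tri_bound(2)[OF B_cont HvL GvL GvL])
      also have "\<dots> \<le> T * x * (Cd * d) * (Cd * x)"
        unfolding d_def x_def using T0 ND0 G4 Lp_norm_nonneg Cd0
        by (intro mult_mono mult_nonneg_nonneg) auto
      finally show ?thesis .
    qed
    have key: "\<alpha> * x\<^sup>2 \<le> T * Cd\<^sup>2 * d * x\<^sup>2"
    proof -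
      have "\<alpha> * x\<^sup>2 \<le> A (Hv \<delta>) (Hv \<delta>)" unfolding x_def by (rule coer)
      also have "\<dots> \<le> \<bar>B (Hv \<delta>) (Gv \<Psi>2) (Gv \<delta>)\<bar>" using eq by simp
      also have "\<dots> \<le> T * x * (Cd * d) * (Cd * x)" by (rule Bb)
      also have "\<dots> = T * Cd\<^sup>2 * d * x\<^sup>2" by (simp add: power2_eq_square)
      finally show ?thesis .
    qed
    have "x = 0"
    proof (rule ccontr)
      assume "x \<noteq> 0"
      then have xp: "x\<^sup>2 > 0" using x0 by simp
      have ad: "\<alpha> \<le> T * Cd\<^sup>2 * d" using key xp by simp
      have dp: "d > 0"
      proof (rule ccontr)
        assume "\<not> d > 0" then have "d = 0" using d0 by simp
        then show False using ad alpha_pos by simp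
      qed
      have ap: "\<alpha> * d\<^sup>2 \<le> L (Ev \<Psi>2)" unfolding d_def by (rule apriori[OF s2])
      have "\<alpha> * d\<^sup>2 > 0" using alpha_pos dp by simp
      then have Lnz: "L (Ev \<Psi>2) \<noteq> 0" using ap by simp
      have "\<alpha> * d\<^sup>2 \<le> dual_norm \<Omega> L * C2eq * Gamma_E \<Omega> Hd Ed * d"
        using ap Lbound[OF Lnz] unfolding d_def by simp
      then have ad2: "\<alpha> * d \<le> dual_norm \<Omega> L * C2eq * Gamma_E \<Omega> Hd Ed"
        using dp by (simp add: power2_eq_square)
      have TC0: "0 \<le> T * Cd\<^sup>2" using T0 by simp
      have "\<alpha>\<^sup>2 = \<alpha> * \<alpha>" by (simp add: power2_eq_square)
      also have "\<dots> \<le> \<alpha> * (T * Cd\<^sup>2 * d)" using ad alpha_pos by simp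
      also have "\<dots> = T * Cd\<^sup>2 * (\<alpha> * d)" by simp
      also have "\<dots> \<le> T * Cd\<^sup>2 * (dual_norm \<Omega> L * C2eq * Gamma_E \<Omega> Hd Ed)"
        by (rule mult_left_mono[OF ad2 TC0])
      also have "\<dots> = dual_norm \<Omega> L * trilinear_norm \<Omega> B * (C_disc \<Omega> Pd Gd Hd)\<^sup>2 * Gamma_E \<Omega> Hd Ed * C2eq"
        unfolding T_def Cd_def by simp
      finally show False using cond by simp
    qed
    then have "(\<Sum>i\<in>UNIV. (disc_norm \<Omega> Hd (\<delta> $ i))\<^sup>2) = 0" unfolding x_def ND_eq by simp
    then have "\<forall>i\<in>UNIV. (disc_norm \<Omega> Hd (\<delta> $ i))\<^sup>2 = 0" by (simp add: sum_nonneg_eq_0_iff)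
    then have "\<delta> $ i = 0" for i using Hdnz by simp
    then have "\<delta> = 0" by (simp add: vec_eq_iff)
    then show "\<Psi>1 = \<Psi>2" unfolding \<delta>_def by simp
  qed
  show ?thesis using part1 part2 by blast
qed


end
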